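(* Let $(\mathcal{C},P)$ be a heaco. Then $(\mathcal{C},P)$ is implicational if and only if $(\mathcal{C},P)$ is a tripos.
   Context: A doctrine is a pair $(\mathcal{C},P)$, $\mathcal{C}$ a category with finite products, $P:\mathcal{C}^{op}\to\mathbf{Pos}$ a functor, $f^*=P(f)$; primary: each $P(A)$ has binary meets preserved by each $f^*$. Elementary: primary and for every $A$ there is $\delta_A\in P(A\times A)$ such that for every $X$ the assignment $\psi\mapsto\langle\pi_1,\pi_2\rangle^*\psi\wedge\langle\pi_2,\pi_3\rangle^*\delta_A$ is a left adjoint $P(X\times A)\to P(X\times A\times A)$ to $(id_X\times\Delta_A)^*$. Graph of $f:X\to A$: $\mathcal{G}(f)=(f\times id_A)^*\delta_A$. Stable initial object: initial $0$ with $X\times0\cong0$ for all $X$. AC: for every $A$ not stable initial and every $\Gamma$, $\pi_\Gamma^*$ ($\pi_\Gamma:\Gamma\times A\to\Gamma$) has a left adjoint $\Sigma_{\pi_\Gamma}$ and each $\psi\in P(\Gamma\times A)$ has a chosen $\epsilon_\psi:\Gamma\to A$ with $\Sigma_{\pi_\Gamma}\psi=\langle id_\Gamma,\epsilon_\psi\rangle^*\psi$ (also with factors swapped). Co-comprehension: each $P(A)$ has a bottom and each $\alpha$ has $\lceil\alpha\rceil:\{\alpha\}^o\to A$ with $\lceil\alpha\rceil^*\alpha=\bot$, universal among $f$ with $f^*\alpha=\bot$; full if $\lceil\beta\rceil$ factoring through $\lceil\alpha\rceil$ implies $\alpha\le\beta$. An eaco is an elementary doctrine with full co-comprehension satisfying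 AC such that for every $f:X\to A$, $\alpha\in P(A)$: $f^*\langle\epsilon_{\mathcal{G}(\lceil\alpha\rceil)},id_A\rangle^*\mathcal{G}(\lceil\alpha\rceil)=\langle\epsilon_{\mathcal{G}(\lceil f^*\alpha\rceil)},id_X\rangle^*\mathcal{G}(\lceil f^*\alpha\rceil)$. Higher order: for every $A$ there are $\mathbb{P}(A)$ and $\in_A\in P(A\times\mathbb{P}(A))$ such that every $\phi\in P(A\times Y)$ equals $(id_A\times\chi_\phi)^*\in_A$ for some $\chi_\phi:Y\to\mathbb{P}(A)$. A heaco is a higher order eaco. Implicational: each $P(A)$ carries an operation $\rightarrow$ with (ii) $f^*(\alpha\rightarrow\beta)=f^*\alpha\rightarrow f^*\beta$; (iii) for every projection $\pi_A:X\times A\to A$, right adjoints $\Pi_{\pi_A}$ of $\pi_A^*$ exist and $\Pi_{\pi_A}(\pi_A^*\alpha\rightarrow\beta)=\alpha\rightarrow\Pi_{\pi_A}\beta$; (iv) (a) $\phi\le\psi\rightarrow\phi$; (b) $\gamma\rightarrow(\phi\rightarrow\psi)\le(\gamma\rightarrow\phi)\rightarrow(\gamma\rightarrow\psi)$; (c) if $\gamma\le\phi\rightarrow\psi$ and $\gamma\le\phi$ then $\gamma\le\psi$; (d) if $\phi\le\psi$ then $\gamma\le\phi\rightarrow\psi$. A tripos is a doctrine such that (i) each $P(A)$ is a Heyting algebra and each $f^*$ a Heyting homomorphism; (ii) for every product projection $f$, $f^*$ has left and right adjoints $\Sigma_f,\Pi_f$ satisfying Beck–Chevalley ($h^*\Sigma_f\gamma=\Sigma_gk^*\gamma$,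 $h^*\Pi_f\gamma=\Pi_gk^*\gamma$ for pullback squares $h\circ g=f\circ k$); (iii) for each $X$ there is $\delta_X\in P(X\times X)$ with $\top_X\le\Delta_X^*\alpha$ iff $\delta_X\le\alpha$ for all $\alpha\in P(X\times X)$; (iv) it is higher order. *)

theory Defs
  imports Main
begin

text \<open>Objects are the elements of type 'o, arrows the elements of type 'a
  (so every small category can be represented). comp g f is g o f.
  prd A B is the chosen product A x B with projections pr1 A B, pr2 A B
  and pairing pair f g.\<close>

record ('o,'a) fpcat =
  cdom :: "'a \<Rightarrow> 'o"
  ccod :: "'a \<Rightarrow> 'o"
  cid  :: "'o \<Rightarrow> 'a"
  comp :: "'a \<Rightarrow> 'a \<Rightarrow> 'a"
  prd  :: "'o \<Rightarrow> 'o \<Rightarrow> 'o"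
  pr1  :: "'o \<Rightarrow> 'o \<Rightarrow> 'a"
  pr2  :: "'o \<Rightarrow> 'o \<Rightarrow> 'a"
  pair :: "'a \<Rightarrow> 'a \<Rightarrow> 'a"

text \<open>A doctrine: P(A) is the carrier Pr A ordered by Le A; f^* is Re f.\<close>

record ('o,'a,'p) doctrine = "('o,'a) fpcat" +
  Pr :: "'o \<Rightarrow> 'p set"
  Le :: "'o \<Rightarrow> 'p \<Rightarrow> 'p \<Rightarrow> bool"
  Re :: "'a \<Rightarrow> 'p \<Rightarrow> 'p"

type_synonym ('o,'a,'p) doc = "('o,'a,'p) doctrine"

definition hom :: "('o,'a,'p) doc \<Rightarrow> 'a \<Rightarrow> 'o \<Rightarrow> 'o \<Rightarrow> bool" where
  "hom D f X Y \<longleftrightarrow> cdom D f = X \<and> ccod D f = Y"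

definition fp_category :: "('o,'a,'p) doc \<Rightarrow> bool" where
  "fp_category D \<longleftrightarrow>
     (\<forall>X. hom D (cid D X) X X) \<and>
     (\<forall>f g. ccod D f = cdom D g \<longrightarrow> hom D (comp D g f) (cdom D f) (ccod D g)) \<and>
     (\<forall>f. comp D (cid D (ccod D f)) f = f \<and> comp D f (cid D (cdom D f)) = f) \<and>
     (\<forall>f g h. ccod D f = cdom D g \<and> ccod D g = cdom D h \<longrightarrow>
        comp D h (comp D g f) = comp D (comp D h g) f) \<and>
     (\<exists>T. \<forall>X. \<exists>!f. hom D f X T) \<and>
     (\<forall>A B. hom D (pr1 D A B) (prd D A B) A \<and> hom D (pr2 D A B) (prd D A B) B) \<and>
     (\<forall>f g X A B. hom D f X A \<and> hom D g X B \<longrightarrow>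
        hom D (pair D f g) X (prd D A B) \<and>
        comp D (pr1 D A B) (pair D f g) = f \<and> comp D (pr2 D A B) (pair D f g) = g) \<and>
     (\<forall>h X A B. hom D h X (prd D A B) \<longrightarrow>
        h = pair D (comp D (pr1 D A B) h) (comp D (pr2 D A B) h))"

definition fprod :: "('o,'a,'p) doc \<Rightarrow> 'a \<Rightarrow> 'a \<Rightarrow> 'a" where
  "fprod D f g = pair D (comp D f (pr1 D (cdom D f) (cdom D g)))
                        (comp D g (pr2 D (cdom D f) (cdom D g)))"

definition doctrine :: "('o,'a,'p) doc \<Rightarrow> bool" where
  "doctrine D \<longleftrightarrow> fp_category D \<and>
     (\<forall>A. (\<forall>x\<in>Pr D A. Le D A x x) \<and>
          (\<forall>x\<in>Pr D A. \<forall>y\<in>Pr D A. Le D A x y \<and> Le D A y x \<longrightarrow> x = y) \<and>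
          (\<forall>x\<in>Pr D A. \<forall>y\<in>Pr D A. \<forall>z\<in>Pr D A. Le D A x y \<and> Le D A y z \<longrightarrow> Le D A x z)) \<and>
     (\<forall>f. \<forall>x\<in>Pr D (ccod D f). Re D f x \<in> Pr D (cdom D f)) \<and>
     (\<forall>f. \<forall>x\<in>Pr D (ccod D f). \<forall>y\<in>Pr D (ccod D f).
        Le D (ccod D f) x y \<longrightarrow> Le D (cdom D f) (Re D f x) (Re D f y)) \<and>
     (\<forall>A. \<forall>x\<in>Pr D A. Re D (cid D A) x = x) \<and>
     (\<forall>f g. ccod D f = cdom D g \<longrightarrow>
        (\<forall>x\<in>Pr D (ccod D g). Re D (comp D g f) x = Re D f (Re D g x)))"

definition is_meet :: "('o,'a,'p) doc \<Rightarrow> 'o \<Rightarrow> 'p \<Rightarrow> 'p \<Rightarrow> 'p \<Rightarrow> bool" where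
  "is_meet D A x y m \<longleftrightarrow> m \<in> Pr D A \<and> Le D A m x \<and> Le D A m y \<and>
     (\<forall>z\<in>Pr D A. Le D A z x \<and> Le D A z y \<longrightarrow> Le D A z m)"

definition is_join :: "('o,'a,'p) doc \<Rightarrow> 'o \<Rightarrow> 'p \<Rightarrow> 'p \<Rightarrow> 'p \<Rightarrow> bool" where
  "is_join D A x y j \<longleftrightarrow> j \<in> Pr D A \<and> Le D A x j \<and> Le D A y j \<and>
     (\<forall>z\<in>Pr D A. Le D A x z \<and> Le D A y z \<longrightarrow> Le D A j z)"

definition is_top :: "('o,'a,'p) doc \<Rightarrow> 'o \<Rightarrow> 'p \<Rightarrow> bool" where
  "is_top D A t \<longleftrightarrow> t \<in> Pr D A \<and> (\<forall>z\<in>Pr D A. Le D A z t)"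

definition is_bot :: "('o,'a,'p) doc \<Rightarrow> 'o \<Rightarrow> 'p \<Rightarrow> bool" where
  "is_bot D A b \<longleftrightarrow> b \<in> Pr D A \<and> (\<forall>z\<in>Pr D A. Le D A b z)"

definition is_imp :: "('o,'a,'p) doc \<Rightarrow> 'o \<Rightarrow> 'p \<Rightarrow> 'p \<Rightarrow> 'p \<Rightarrow> bool" where
  "is_imp D A x y z \<longleftrightarrow> z \<in> Pr D A \<and>
     (\<forall>w\<in>Pr D A. Le D A w z \<longleftrightarrow> (\<forall>m. is_meet D A w x m \<longrightarrow> Le D A m y))"

definition meet :: "('o,'a,'p) doc \<Rightarrow> 'o \<Rightarrow> 'p \<Rightarrow> 'p \<Rightarrow> 'p" where
  "meet D A x y = (SOME m. is_meet D A x y m)"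

definition top :: "('o,'a,'p) doc \<Rightarrow> 'o \<Rightarrow> 'p" where
  "top D A = (SOME t. is_top D A t)"

definition bot :: "('o,'a,'p) doc \<Rightarrow> 'o \<Rightarrow> 'p" where
  "bot D A = (SOME b. is_bot D A b)"

definition is_ladj :: "('o,'a,'p) doc \<Rightarrow> 'o \<Rightarrow> 'o \<Rightarrow> ('p \<Rightarrow> 'p) \<Rightarrow> ('p \<Rightarrow> 'p) \<Rightarrow> bool" where
  "is_ladj D A B L R \<longleftrightarrow> (\<forall>x\<in>Pr D A. L x \<in> Pr D B) \<and> (\<forall>y\<in>Pr D B. R y \<in> Pr D A) \<and>
     (\<forall>x\<in>Pr D A. \<forall>y\<in>Pr D B. Le D B (L x) y \<longleftrightarrow> Le D A x (R y))"

definition primary :: "('o,'a,'p) doc \<Rightarrow> bool" where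
  "primary D \<longleftrightarrow> doctrine D \<and>
     (\<forall>A. \<forall>x\<in>Pr D A. \<forall>y\<in>Pr D A. \<exists>m. is_meet D A x y m) \<and>
     (\<forall>f. \<forall>x\<in>Pr D (ccod D f). \<forall>y\<in>Pr D (ccod D f). \<forall>m.
        is_meet D (ccod D f) x y m \<longrightarrow>
        is_meet D (cdom D f) (Re D f x) (Re D f y) (Re D f m))"

text \<open>X x A x A is represented as (X x A) x A; then <pi1,pi2> is pr1 (X x A) A,
  <pi2,pi3> is pair pi2 pi3, and id_X x Delta_A is pair (id_(X x A)) (pr2 X A).\<close>
definition elementary_with :: "('o,'a,'p) doc \<Rightarrow> ('o \<Rightarrow> 'p) \<Rightarrow> bool" where
  "elementary_with D \<delta> \<longleftrightarrow> primary D \<and>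
     (\<forall>A. \<delta> A \<in> Pr D (prd D A A)) \<and>
     (\<forall>X A. let XA = prd D X A; XAA = prd D XA A;
               p2 = comp D (pr2 D X A) (pr1 D XA A); p3 = pr2 D XA A
           in is_ladj D XA XAA
                (\<lambda>\<psi>. meet D XAA (Re D (pr1 D XA A) \<psi>) (Re D (pair D p2 p3) (\<delta> A)))
                (Re D (pair D (cid D XA) (pr2 D X A))))"

definition graph :: "('o,'a,'p) doc \<Rightarrow> ('o \<Rightarrow> 'p) \<Rightarrow> 'a \<Rightarrow> 'p" where
  "graph D \<delta> f = Re D (fprod D f (cid D (ccod D f))) (\<delta> (ccod D f))"

definition is_initial :: "('o,'a,'p) doc \<Rightarrow> 'o \<Rightarrow> bool" where
  "is_initial D Z \<longleftrightarrow> (\<forall>Y. \<exists>!f. hom D f Z Y)"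

definition iso :: "('o,'a,'p) doc \<Rightarrow> 'o \<Rightarrow> 'o \<Rightarrow> bool" where
  "iso D X Y \<longleftrightarrow> (\<exists>f g. hom D f X Y \<and> hom D g Y X \<and>
      comp D g f = cid D X \<and> comp D f g = cid D Y)"

definition stable_initial :: "('o,'a,'p) doc \<Rightarrow> 'o \<Rightarrow> bool" where
  "stable_initial D Z \<longleftrightarrow> is_initial D Z \<and> (\<forall>X. iso D (prd D X Z) Z)"

text \<open>eps1 Gamma A psi : Gamma -> A for psi in P(Gamma x A);
  eps2 A Gamma psi : Gamma -> A for psi in P(A x Gamma) (factors swapped).\<close>
definition AC :: "('o,'a,'p) doc \<Rightarrow> ('o \<Rightarrow> 'o \<Rightarrow> 'p \<Rightarrow> 'a) \<Rightarrow> ('o \<Rightarrow> 'o \<Rightarrow> 'p \<Rightarrow> 'a) \<Rightarrow> bool" where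
  "AC D eps1 eps2 \<longleftrightarrow> (\<forall>A \<Gamma>. \<not> stable_initial D A \<longrightarrow>
      (\<forall>\<psi>\<in>Pr D (prd D \<Gamma> A). hom D (eps1 \<Gamma> A \<psi>) \<Gamma> A) \<and>
      is_ladj D (prd D \<Gamma> A) \<Gamma> (\<lambda>\<psi>. Re D (pair D (cid D \<Gamma>) (eps1 \<Gamma> A \<psi>)) \<psi>)
        (Re D (pr1 D \<Gamma> A)) \<and>
      (\<forall>\<psi>\<in>Pr D (prd D A \<Gamma>). hom D (eps2 A \<Gamma> \<psi>) \<Gamma> A) \<and>
      is_ladj D (prd D A \<Gamma>) \<Gamma> (\<lambda>\<psi>. Re D (pair D (eps2 A \<Gamma> \<psi>) (cid D \<Gamma>)) \<psi>)
        (Re D (pr2 D A \<Gamma>)))"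

text \<open>cc A alpha is the arrow ceil(alpha) : {alpha}^o -> A\<close>
definition co_comprehension :: "('o,'a,'p) doc \<Rightarrow> ('o \<Rightarrow> 'p \<Rightarrow> 'a) \<Rightarrow> bool" where
  "co_comprehension D cc \<longleftrightarrow> (\<forall>A. \<exists>b. is_bot D A b) \<and>
     (\<forall>A. \<forall>\<alpha>\<in>Pr D A. ccod D (cc A \<alpha>) = A \<and>
        Re D (cc A \<alpha>) \<alpha> = bot D (cdom D (cc A \<alpha>)) \<and>
        (\<forall>f. ccod D f = A \<and> Re D f \<alpha> = bot D (cdom D f) \<longrightarrow>
           (\<exists>!g. hom D g (cdom D f) (cdom D (cc A \<alpha>)) \<and> comp D (cc A \<alpha>) g = f)))"

definition full_cc :: "('o,'a,'p) doc \<Rightarrow> ('o \<Rightarrow> 'p \<Rightarrow> 'a) \<Rightarrow> bool" where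
  "full_cc D cc \<longleftrightarrow> (\<forall>A. \<forall>\<alpha>\<in>Pr D A. \<forall>\<beta>\<in>Pr D A.
     (\<exists>h. hom D h (cdom D (cc A \<beta>)) (cdom D (cc A \<alpha>)) \<and> comp D (cc A \<alpha>) h = cc A \<beta>)
     \<longrightarrow> Le D A \<alpha> \<beta>)"

text \<open>The term <eps_{G(ceil alpha)}, id_A>^* G(ceil alpha) in P(A).\<close>
definition exim :: "('o,'a,'p) doc \<Rightarrow> ('o \<Rightarrow> 'p) \<Rightarrow> ('o \<Rightarrow> 'o \<Rightarrow> 'p \<Rightarrow> 'a)
     \<Rightarrow> ('o \<Rightarrow> 'p \<Rightarrow> 'a) \<Rightarrow> 'o \<Rightarrow> 'p \<Rightarrow> 'p" where
  "exim D \<delta> eps2 cc A \<alpha> =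
     (let c = cc A \<alpha>; Oc = cdom D c; \<psi> = graph D \<delta> c
      in Re D (pair D (eps2 Oc A \<psi>) (cid D A)) \<psi>)"

definition eaco_with :: "('o,'a,'p) doc \<Rightarrow> ('o \<Rightarrow> 'p) \<Rightarrow> ('o \<Rightarrow> 'o \<Rightarrow> 'p \<Rightarrow> 'a)
     \<Rightarrow> ('o \<Rightarrow> 'o \<Rightarrow> 'p \<Rightarrow> 'a) \<Rightarrow> ('o \<Rightarrow> 'p \<Rightarrow> 'a) \<Rightarrow> bool" where
  "eaco_with D \<delta> eps1 eps2 cc \<longleftrightarrow>
     elementary_with D \<delta> \<and> co_comprehension D cc \<and> full_cc D cc \<and> AC D eps1 eps2 \<and>
     (\<forall>f. \<forall>\<alpha>\<in>Pr D (ccod D f).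
        \<not> stable_initial D (cdom D (cc (ccod D f) \<alpha>)) \<and>
        \<not> stable_initial D (cdom D (cc (cdom D f) (Re D f \<alpha>))) \<longrightarrow>
        Re D f (exim D \<delta> eps2 cc (ccod D f) \<alpha>) =
        exim D \<delta> eps2 cc (cdom D f) (Re D f \<alpha>))"

definition higher_order :: "('o,'a,'p) doc \<Rightarrow> bool" where
  "higher_order D \<longleftrightarrow> (\<forall>A. \<exists>PA e. e \<in> Pr D (prd D A PA) \<and>
      (\<forall>Y. \<forall>\<phi>\<in>Pr D (prd D A Y). \<exists>\<chi>. hom D \<chi> Y PA \<and> \<phi> = Re D (fprod D (cid D A) \<chi>) e))"

definition heaco :: "('o,'a,'p) doc \<Rightarrow> bool" where
  "heaco D \<longleftrightarrow> (\<exists>\<delta> eps1 eps2 cc. eaco_with D \<delta> eps1 eps2 cc) \<and> higher_order D"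

definition implicational :: "('o,'a,'p) doc \<Rightarrow> bool" where
  "implicational D \<longleftrightarrow> (\<exists>imp :: 'o \<Rightarrow> 'p \<Rightarrow> 'p \<Rightarrow> 'p.
     (\<forall>A. \<forall>x\<in>Pr D A. \<forall>y\<in>Pr D A. imp A x y \<in> Pr D A) \<and>
     (\<forall>f. \<forall>x\<in>Pr D (ccod D f). \<forall>y\<in>Pr D (ccod D f).
        Re D f (imp (ccod D f) x y) = imp (cdom D f) (Re D f x) (Re D f y)) \<and>
     (\<forall>X A. \<exists>\<Pi>. is_ladj D A (prd D X A) (Re D (pr2 D X A)) \<Pi> \<and>
        (\<forall>\<alpha>\<in>Pr D A. \<forall>\<beta>\<in>Pr D (prd D X A).
           \<Pi> (imp (prd D X A) (Re D (pr2 D X A) \<alpha>) \<beta>) = imp A \<alpha> (\<Pi> \<beta>))) \<and>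
     (\<forall>A. \<forall>\<phi>\<in>Pr D A. \<forall>\<psi>\<in>Pr D A. \<forall>\<gamma>\<in>Pr D A.
        Le D A \<phi> (imp A \<psi> \<phi>) \<and>
        Le D A (imp A \<gamma> (imp A \<phi> \<psi>)) (imp A (imp A \<gamma> \<phi>) (imp A \<gamma> \<psi>)) \<and>
        (Le D A \<gamma> (imp A \<phi> \<psi>) \<and> Le D A \<gamma> \<phi> \<longrightarrow> Le D A \<gamma> \<psi>) \<and>
        (Le D A \<phi> \<psi> \<longrightarrow> Le D A \<gamma> (imp A \<phi> \<psi>))))"

definition heyting :: "('o,'a,'p) doc \<Rightarrow> 'o \<Rightarrow> bool" where
  "heyting D A \<longleftrightarrow> (\<exists>t. is_top D A t) \<and> (\<exists>b. is_bot D A b) \<and>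
     (\<forall>x\<in>Pr D A. \<forall>y\<in>Pr D A. (\<exists>m. is_meet D A x y m) \<and> (\<exists>j. is_join D A x y j) \<and>
        (\<exists>z. is_imp D A x y z))"

definition heyting_hom :: "('o,'a,'p) doc \<Rightarrow> 'a \<Rightarrow> bool" where
  "heyting_hom D f \<longleftrightarrow> (let A = ccod D f; B = cdom D f in
     (\<forall>t. is_top D A t \<longrightarrow> is_top D B (Re D f t)) \<and>
     (\<forall>b. is_bot D A b \<longrightarrow> is_bot D B (Re D f b)) \<and>
     (\<forall>x\<in>Pr D A. \<forall>y\<in>Pr D A. \<forall>z.
        (is_meet D A x y z \<longrightarrow> is_meet D B (Re D f x) (Re D f y) (Re D f z)) \<and>
        (is_join D A x y z \<longrightarrow> is_join D B (Re D f x) (Re D f y) (Re D f z)) \<and>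
        (is_imp D A x y z \<longrightarrow> is_imp D B (Re D f x) (Re D f y) (Re D f z))))"

definition projection :: "('o,'a,'p) doc \<Rightarrow> 'a \<Rightarrow> bool" where
  "projection D f \<longleftrightarrow> (\<exists>X Y. f = pr1 D X Y \<or> f = pr2 D X Y)"

text \<open>The square h o g = f o k (g : W -> Y, k : W -> dom f, h : Y -> cod f) is a pullback.\<close>
definition is_pullback :: "('o,'a,'p) doc \<Rightarrow> 'a \<Rightarrow> 'a \<Rightarrow> 'a \<Rightarrow> 'a \<Rightarrow> bool" where
  "is_pullback D h g f k \<longleftrightarrow>
     ccod D h = ccod D f \<and> ccod D g = cdom D h \<and> ccod D k = cdom D f \<and>
     cdom D g = cdom D k \<and> comp D h g = comp D f k \<and>
     (\<forall>u v. cdom D u = cdom D v \<and> ccod D u = cdom D h \<and> ccod D v = cdom D f \<and>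
        comp D h u = comp D f v \<longrightarrow>
        (\<exists>!w. hom D w (cdom D u) (cdom D g) \<and> comp D g w = u \<and> comp D k w = v))"

definition tripos :: "('o,'a,'p) doc \<Rightarrow> bool" where
  "tripos D \<longleftrightarrow> doctrine D \<and>
     (\<forall>A. heyting D A) \<and> (\<forall>f. heyting_hom D f) \<and>
     (\<exists>Sig Pi :: 'a \<Rightarrow> 'p \<Rightarrow> 'p.
        (\<forall>f. projection D f \<longrightarrow>
           is_ladj D (cdom D f) (ccod D f) (Sig f) (Re D f) \<and>
           is_ladj D (ccod D f) (cdom D f) (Re D f) (Pi f)) \<and>
        (\<forall>h g f k. projection D f \<and> projection D g \<and> is_pullback D h g f k \<longrightarrow>
           (\<forall>\<gamma>\<in>Pr D (cdom D f). Re D h (Sig f \<gamma>) = Sig g (Re D k \<gamma>) \<and>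
                                 Re D h (Pi f \<gamma>) = Pi g (Re D k \<gamma>)))) \<and>
     (\<exists>\<delta>. \<forall>X. \<delta> X \<in> Pr D (prd D X X) \<and>
        (\<forall>\<alpha>\<in>Pr D (prd D X X).
           Le D X (top D X) (Re D (pair D (cid D X) (cid D X)) \<alpha>) \<longleftrightarrow> Le D (prd D X X) (\<delta> X) \<alpha>)) \<and>
     higher_order D"

end

theory Submission
  imports Defs
begin

locale dc = fixes D :: "('o,'a,'p) doctrine" assumes dc: "doctrine D"
begin

lemma fp: "fp_category D" using dc by (simp add: doctrine_def)

lemma hom_id: "hom D (cid D X) X X" using fp by (simp add: fp_category_def)
lemma hom_comp: "hom D f X Y \<Longrightarrow> hom D g Y Z \<Longrightarrow> hom D (comp D g f) X Z"
  using fp unfolding fp_category_def hom_def by metis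
lemma comp_id_l: "hom D f X Y \<Longrightarrow> comp D (cid D Y) f = f"
  using fp unfolding fp_category_def hom_def by metis
lemma comp_id_r: "hom D f X Y \<Longrightarrow> comp D f (cid D X) = f"
  using fp unfolding fp_category_def hom_def by metis
lemma comp_assoc: "hom D f X Y \<Longrightarrow> hom D g Y Z \<Longrightarrow> hom D h Z W \<Longrightarrow>
   comp D h (comp D g f) = comp D (comp D h g) f"
  using fp unfolding fp_category_def hom_def by metis
lemma hom_pr1: "hom D (pr1 D A B) (prd D A B) A" using fp by (simp add: fp_category_def)
lemma hom_pr2: "hom D (pr2 D A B) (prd D A B) B" using fp by (simp add: fp_category_def)
lemma hom_pair: "hom D f X A \<Longrightarrow> hom D g X B \<Longrightarrow> hom D (pair D f g) X (prd D A B)"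
  using fp unfolding fp_category_def by blast
lemma pr1_pair: "hom D f X A \<Longrightarrow> hom D g X B \<Longrightarrow> comp D (pr1 D A B) (pair D f g) = f"
  using fp unfolding fp_category_def by blast
lemma pr2_pair: "hom D f X A \<Longrightarrow> hom D g X B \<Longrightarrow> comp D (pr2 D A B) (pair D f g) = g"
  using fp unfolding fp_category_def by blast
lemma pair_eta: "hom D h X (prd D A B) \<Longrightarrow> h = pair D (comp D (pr1 D A B) h) (comp D (pr2 D A B) h)"
  using fp unfolding fp_category_def by blast
lemma hom_uniq: "hom D f X Y \<Longrightarrow> hom D f X' Y' \<Longrightarrow> X = X' \<and> Y = Y'" by (simp add: hom_def)

lemma le_refl: "x \<in> Pr D A \<Longrightarrow> Le D A x x" using dc by (simp add: doctrine_def)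
lemma le_antisym: "x \<in> Pr D A \<Longrightarrow> y \<in> Pr D A \<Longrightarrow> Le D A x y \<Longrightarrow> Le D A y x \<Longrightarrow> x = y"
  using dc unfolding doctrine_def by blast
lemma le_trans: "x \<in> Pr D A \<Longrightarrow> y \<in> Pr D A \<Longrightarrow> z \<in> Pr D A \<Longrightarrow> Le D A x y \<Longrightarrow> Le D A y z \<Longrightarrow> Le D A x z"
  using dc unfolding doctrine_def by blast
lemma re_pr: "hom D f X A \<Longrightarrow> x \<in> Pr D A \<Longrightarrow> Re D f x \<in> Pr D X"
  using dc unfolding doctrine_def hom_def by blast
lemma re_mono: "hom D f X A \<Longrightarrow> x \<in> Pr D A \<Longrightarrow> y \<in> Pr D A \<Longrightarrow> Le D A x y \<Longrightarrow> Le D X (Re D f x) (Re D f y)"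
  using dc unfolding doctrine_def hom_def by blast
lemma re_id: "x \<in> Pr D A \<Longrightarrow> Re D (cid D A) x = x"
  using dc unfolding doctrine_def by blast
lemma re_comp: "hom D f X Y \<Longrightarrow> hom D g Y Z \<Longrightarrow> x \<in> Pr D Z \<Longrightarrow> Re D (comp D g f) x = Re D f (Re D g x)"
  using dc unfolding doctrine_def hom_def by metis

lemma bot_uniq: "is_bot D A b \<Longrightarrow> is_bot D A b' \<Longrightarrow> b = b'"
  unfolding is_bot_def using le_antisym by blast
lemma top_uniq: "is_top D A b \<Longrightarrow> is_top D A b' \<Longrightarrow> b = b'"
  unfolding is_top_def using le_antisym by blast
lemma meet_uniq: "is_meet D A x y b \<Longrightarrow> is_meet D A x y b' \<Longrightarrow> b = b'"
  unfolding is_meet_def using le_antisym by blast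
lemma join_uniq: "is_join D A x y b \<Longrightarrow> is_join D A x y b' \<Longrightarrow> b = b'"
  unfolding is_join_def using le_antisym by blast
lemma imp_uniq: "is_imp D A x y b \<Longrightarrow> is_imp D A x y b' \<Longrightarrow> b = b'"
  unfolding is_imp_def by (meson le_antisym le_refl)
lemma bot_is: "is_bot D A b \<Longrightarrow> bot D A = b"
  unfolding bot_def by (metis (mono_tags) bot_uniq someI)
lemma top_is: "is_top D A b \<Longrightarrow> top D A = b"
  unfolding top_def by (metis (mono_tags) top_uniq someI)
lemma meet_is: "is_meet D A x y b \<Longrightarrow> meet D A x y = b"
  unfolding meet_def by (metis (mono_tags) meet_uniq someI)

lemma ladj_uniqL: "is_ladj D A B L R \<Longrightarrow> is_ladj D A B L' R \<Longrightarrow> x \<in> Pr D A \<Longrightarrow> L x = L' x"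
  unfolding is_ladj_def by (meson le_antisym le_refl)
lemma ladj_uniqR: "is_ladj D A B L R \<Longrightarrow> is_ladj D A B L R' \<Longrightarrow> y \<in> Pr D B \<Longrightarrow> R y = R' y"
  unfolding is_ladj_def by (meson le_antisym le_refl)

end

locale hi = dc D for D :: "('o,'a,'p) doctrine" +
  fixes cc :: "'o \<Rightarrow> 'p \<Rightarrow> 'a" and imp :: "'o \<Rightarrow> 'p \<Rightarrow> 'p \<Rightarrow> 'p"
  assumes prim: "primary D" and ccc: "co_comprehension D cc" and fcc: "full_cc D cc"
  and imp_pr: "\<And>A x y. x \<in> Pr D A \<Longrightarrow> y \<in> Pr D A \<Longrightarrow> imp A x y \<in> Pr D A"
  and imp_re: "\<And>f. \<forall>x\<in>Pr D (ccod D f). \<forall>y\<in>Pr D (ccod D f).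
        Re D f (imp (ccod D f) x y) = imp (cdom D f) (Re D f x) (Re D f y)"
  and imp_pi: "\<And>X A. \<exists>\<Pi>. is_ladj D A (prd D X A) (Re D (pr2 D X A)) \<Pi> \<and>
        (\<forall>\<alpha>\<in>Pr D A. \<forall>\<beta>\<in>Pr D (prd D X A).
           \<Pi> (imp (prd D X A) (Re D (pr2 D X A) \<alpha>) \<beta>) = imp A \<alpha> (\<Pi> \<beta>))"
  and imp_ax: "\<And>A. \<forall>\<phi>\<in>Pr D A. \<forall>\<psi>\<in>Pr D A. \<forall>\<gamma>\<in>Pr D A.
        Le D A \<phi> (imp A \<psi> \<phi>) \<and>
        Le D A (imp A \<gamma> (imp A \<phi> \<psi>)) (imp A (imp A \<gamma> \<phi>) (imp A \<gamma> \<psi>)) \<and>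
        (Le D A \<gamma> (imp A \<phi> \<psi>) \<and> Le D A \<gamma> \<phi> \<longrightarrow> Le D A \<gamma> \<psi>) \<and>
        (Le D A \<phi> \<psi> \<longrightarrow> Le D A \<gamma> (imp A \<phi> \<psi>))"
begin

lemma ax_a: "\<phi> \<in> Pr D A \<Longrightarrow> \<psi> \<in> Pr D A \<Longrightarrow> Le D A \<phi> (imp A \<psi> \<phi>)"
  using imp_ax by blast
lemma ax_b: "\<phi> \<in> Pr D A \<Longrightarrow> \<psi> \<in> Pr D A \<Longrightarrow> \<gamma> \<in> Pr D A \<Longrightarrow>
   Le D A (imp A \<gamma> (imp A \<phi> \<psi>)) (imp A (imp A \<gamma> \<phi>) (imp A \<gamma> \<psi>))"
  using imp_ax by blast
lemma mp: "\<phi> \<in> Pr D A \<Longrightarrow> \<psi> \<in> Pr D A \<Longrightarrow> \<gamma> \<in> Pr D A \<Longrightarrow>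
   Le D A \<gamma> (imp A \<phi> \<psi>) \<Longrightarrow> Le D A \<gamma> \<phi> \<Longrightarrow> Le D A \<gamma> \<psi>"
  using imp_ax by blast
lemma ax_d: "\<phi> \<in> Pr D A \<Longrightarrow> \<psi> \<in> Pr D A \<Longrightarrow> \<gamma> \<in> Pr D A \<Longrightarrow>
   Le D A \<phi> \<psi> \<Longrightarrow> Le D A \<gamma> (imp A \<phi> \<psi>)"
  using imp_ax by blast

lemma imp_re': "hom D f X A \<Longrightarrow> x \<in> Pr D A \<Longrightarrow> y \<in> Pr D A \<Longrightarrow>
   Re D f (imp A x y) = imp X (Re D f x) (Re D f y)"
  using imp_re[of f] unfolding hom_def by simp

lemma bot_ex: "\<exists>b. is_bot D A b" using ccc by (simp add: co_comprehension_def)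
lemma bot: "is_bot D A (bot D A)" using bot_ex bot_is by blast
lemma bot_pr[simp]: "bot D A \<in> Pr D A" using bot by (simp add: is_bot_def)
lemma bot_le: "x \<in> Pr D A \<Longrightarrow> Le D A (bot D A) x" using bot by (simp add: is_bot_def)

definition tp where "tp A = imp A (bot D A) (bot D A)"
lemma tp_pr[simp]: "tp A \<in> Pr D A" by (simp add: tp_def imp_pr)
lemma le_tp: "x \<in> Pr D A \<Longrightarrow> Le D A x (tp A)"
  unfolding tp_def by (rule ax_d) (auto intro: le_refl)
lemma is_top_tp: "is_top D A (tp A)" by (simp add: is_top_def le_tp)
lemma top_eq: "top D A = tp A" using is_top_tp top_is by blast

lemma imp_top: "x \<in> Pr D A \<Longrightarrow> y \<in> Pr D A \<Longrightarrow> Le D A x y \<Longrightarrow> imp A x y = tp A"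
proof -
  assume a: "x \<in> Pr D A" "y \<in> Pr D A" "Le D A x y"
  have "Le D A (tp A) (imp A x y)" using ax_d a by simp
  thus ?thesis using le_antisym[OF imp_pr[OF a(1,2)] tp_pr le_tp[OF imp_pr[OF a(1,2)]]] by blast
qed
lemma imp_top_iff: "x \<in> Pr D A \<Longrightarrow> y \<in> Pr D A \<Longrightarrow> Le D A (tp A) (imp A x y) \<Longrightarrow> Le D A x y"
proof -
  assume a: "x \<in> Pr D A" "y \<in> Pr D A" "Le D A (tp A) (imp A x y)"
  have "Le D A x (tp A)" using a le_tp by blast
  hence "Le D A x (imp A x y)" using le_trans[OF a(1) tp_pr imp_pr[OF a(1,2)]] a by blast
  thus ?thesis using mp[OF a(1) a(2) a(1)] le_refl[OF a(1)] by blast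
qed
lemma mono2: assumes "x \<in> Pr D A" "y \<in> Pr D A" "p \<in> Pr D A" "Le D A x y"
  shows "Le D A (imp A p x) (imp A p y)"
proof -
  have "Le D A (tp A) (imp A p (imp A x y))"
    using assms by (simp add: ax_a imp_top)
  then have "Le D A (tp A) (imp A (imp A p x) (imp A p y))"
    using ax_b[of x A y p] assms by (meson imp_pr le_trans tp_pr)
  thus ?thesis using assms by (simp add: imp_pr imp_top_iff)
qed

lemma re_tp: "hom D f X A \<Longrightarrow> Re D f (tp A) = tp X"
proof -
  assume h: "hom D f X A"
  have "Re D f (tp A) = imp X (Re D f (bot D A)) (Re D f (bot D A))"
    unfolding tp_def using imp_re' h by simp
  moreover have "Re D f (bot D A) \<in> Pr D X" using h re_pr bot_pr by blast
  moreover have "imp X (Re D f (bot D A)) (Re D f (bot D A)) = tp X"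
    using imp_top[OF calculation(2) calculation(2) le_refl[OF calculation(2)]] .
  ultimately show ?thesis by simp
qed

lemma meet_ex: "x \<in> Pr D A \<Longrightarrow> y \<in> Pr D A \<Longrightarrow> is_meet D A x y (meet D A x y)"
proof -
  assume "x \<in> Pr D A" "y \<in> Pr D A"
  then obtain m where "is_meet D A x y m" using prim unfolding primary_def by blast
  thus ?thesis using meet_is by simp
qed
lemma meet_pr: "x \<in> Pr D A \<Longrightarrow> y \<in> Pr D A \<Longrightarrow> meet D A x y \<in> Pr D A"
  using meet_ex[of x A y] unfolding is_meet_def by blast
lemma re_meet: "hom D f X A \<Longrightarrow> x \<in> Pr D A \<Longrightarrow> y \<in> Pr D A \<Longrightarrow> Re D f (meet D A x y) = meet D X (Re D f x) (Re D f y)"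
proof -
  assume h: "hom D f X A" and xy: "x \<in> Pr D A" "y \<in> Pr D A"
  have "is_meet D (cdom D f) (Re D f x) (Re D f y) (Re D f (meet D A x y))"
    using prim meet_ex[OF xy] h xy unfolding primary_def hom_def by blast
  thus ?thesis using meet_is h unfolding hom_def by simp
qed

end

context hi begin

lemma le_bot_eq: "x \<in> Pr D A \<Longrightarrow> Le D A x (bot D A) \<Longrightarrow> x = bot D A"
  by (simp add: bot_le le_antisym)

lemma re_bot_pr2: "Re D (pr2 D X A) (bot D A) = bot D (prd D X A)"
proof -
  let ?B = "prd D X A" and ?p = "pr2 D X A"
  obtain \<Pi> where ad: "is_ladj D A ?B (Re D ?p) \<Pi>" and fr: "\<forall>\<alpha>\<in>Pr D A. \<forall>\<beta>\<in>Pr D ?B.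
           \<Pi> (imp ?B (Re D ?p \<alpha>) \<beta>) = imp A \<alpha> (\<Pi> \<beta>)" using imp_pi by blast
  have h: "hom D ?p ?B A" by (rule hom_pr2)
  have pb: "Re D ?p (bot D A) \<in> Pr D ?B" using h re_pr bot_pr by blast
  let ?y = "imp ?B (Re D ?p (bot D A)) (bot D ?B)"
  have yp: "?y \<in> Pr D ?B" using pb imp_pr bot_pr by blast
  have pib: "\<Pi> (bot D ?B) \<in> Pr D A" using ad unfolding is_ladj_def by simp
  have "\<Pi> ?y = imp A (bot D A) (\<Pi> (bot D ?B))" using fr by simp
  also have "\<dots> = tp A" using pib by (simp add: imp_top bot_le)
  finally have "Le D A (tp A) (\<Pi> ?y)" by (simp add: le_refl)
  hence "Le D ?B (Re D ?p (tp A)) ?y" using ad yp unfolding is_ladj_def by simp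
  hence "Le D ?B (tp ?B) ?y" using re_tp[OF h] by simp
  hence "Le D ?B (Re D ?p (bot D A)) (bot D ?B)" using imp_top_iff pb by simp
  thus ?thesis using pb le_bot_eq by blast
qed

lemma re_bot_inv: assumes "hom D f X Y" "hom D g Y X" "comp D g f = cid D X"
  shows "Re D f (bot D Y) = bot D X"
proof -
  have "is_bot D X (Re D f (bot D Y))"
    unfolding is_bot_def
  proof
    show "Re D f (bot D Y) \<in> Pr D X" using assms re_pr bot_pr by blast
    show "\<forall>z\<in>Pr D X. Le D X (Re D f (bot D Y)) z"
    proof
      fix z assume z: "z \<in> Pr D X"
      have "Re D f (Re D g z) = z" using re_comp[OF assms(1,2) z] assms(3) re_id z by simp
      moreover have "Le D X (Re D f (bot D Y)) (Re D f (Re D g z))"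
        using assms z by (meson bot_le bot_pr re_mono re_pr)
      ultimately show "Le D X (Re D f (bot D Y)) z" by simp
    qed
  qed
  thus ?thesis using bot_is by simp
qed

definition sw where "sw X A = pair D (pr2 D X A) (pr1 D X A)"
lemma hom_sw: "hom D (sw X A) (prd D X A) (prd D A X)"
  unfolding sw_def by (simp add: hom_pair hom_pr1 hom_pr2)
lemma sw_pr1: "comp D (pr1 D A X) (sw X A) = pr2 D X A"
  unfolding sw_def by (rule pr1_pair[OF hom_pr2 hom_pr1])
lemma sw_pr2: "comp D (pr2 D A X) (sw X A) = pr1 D X A"
  unfolding sw_def by (rule pr2_pair[OF hom_pr2 hom_pr1])
lemma sw_sw: "comp D (sw A X) (sw X A) = cid D (prd D X A)"
proof -
  let ?h = "comp D (sw A X) (sw X A)"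
  have h: "hom D ?h (prd D X A) (prd D X A)" using hom_comp hom_sw by blast
  have 1: "comp D (pr1 D X A) ?h = pr1 D X A"
    using comp_assoc[OF hom_sw hom_sw hom_pr1] sw_pr1 sw_pr2 by simp
  have 2: "comp D (pr2 D X A) ?h = pr2 D X A"
    using comp_assoc[OF hom_sw hom_sw hom_pr2] sw_pr1 sw_pr2 by simp
  have "?h = pair D (pr1 D X A) (pr2 D X A)" using pair_eta[OF h] 1 2 by simp
  moreover have "cid D (prd D X A) = pair D (pr1 D X A) (pr2 D X A)"
    using pair_eta[OF hom_id] comp_id_r[OF hom_pr1] comp_id_r[OF hom_pr2] by metis
  ultimately show ?thesis by simp
qed

lemma re_bot_pr1: "Re D (pr1 D X A) (bot D X) = bot D (prd D X A)"
proof -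
  have "Re D (pr1 D X A) (bot D X) = Re D (sw X A) (Re D (pr2 D A X) (bot D X))"
    using re_comp[OF hom_sw hom_pr2] sw_pr2 bot_pr by metis
  also have "\<dots> = Re D (sw X A) (bot D (prd D A X))" by (simp add: re_bot_pr2)
  also have "\<dots> = bot D (prd D X A)" using re_bot_inv[OF hom_sw hom_sw sw_sw] .
  finally show ?thesis .
qed

lemma re_bot: assumes "hom D f X A" shows "Re D f (bot D A) = bot D X"
proof -
  let ?s = "pair D (cid D X) f"
  have hs: "hom D ?s X (prd D X A)" using assms hom_id hom_pair by blast
  have 1: "comp D (pr2 D X A) ?s = f" using pr2_pair hom_id assms by blast
  have 2: "comp D (pr1 D X A) ?s = cid D X" using pr1_pair hom_id assms by blast
  have "Re D f (bot D A) = Re D ?s (Re D (pr2 D X A) (bot D A))"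
    using re_comp[OF hs hom_pr2] 1 bot_pr by metis
  also have "\<dots> = Re D ?s (Re D (pr1 D X A) (bot D X))" by (simp add: re_bot_pr2 re_bot_pr1)
  also have "\<dots> = Re D (cid D X) (bot D X)" using re_comp[OF hs hom_pr1] 2 bot_pr by metis
  also have "\<dots> = bot D X" using re_id bot_pr by blast
  finally show ?thesis .
qed

lemma re_bot': "Re D f (bot D (ccod D f)) = bot D (cdom D f)"
  using re_bot by (simp add: hom_def)

lemma cc_hom: "\<alpha> \<in> Pr D A \<Longrightarrow> hom D (cc A \<alpha>) (cdom D (cc A \<alpha>)) A"
  using ccc unfolding co_comprehension_def hom_def by blast

lemma le_via_cc: assumes "\<alpha> \<in> Pr D A" "\<beta> \<in> Pr D A"
  and H: "\<And>Q c. hom D c Q A \<Longrightarrow> Re D c \<beta> = bot D Q \<Longrightarrow> Re D c \<alpha> = bot D Q"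
  shows "Le D A \<alpha> \<beta>"
proof -
  let ?c = "cc A \<beta>"
  have hc: "hom D ?c (cdom D ?c) A" using cc_hom assms by blast
  have "Re D ?c \<beta> = bot D (cdom D ?c)" using ccc assms unfolding co_comprehension_def by blast
  hence "Re D ?c \<alpha> = bot D (cdom D ?c)" using H hc by blast
  hence "\<exists>!g. hom D g (cdom D ?c) (cdom D (cc A \<alpha>)) \<and> comp D (cc A \<alpha>) g = ?c"
    using ccc assms hc unfolding co_comprehension_def hom_def by blast
  thus ?thesis using fcc assms unfolding full_cc_def by blast
qed

lemma imp_bot_bot: "imp A (tp A) (bot D A) = bot D A"
  by (meson bot_pr imp_pr le_bot_eq le_refl le_tp mp tp_pr)

lemma L1: assumes x: "x \<in> Pr D A" and e: "imp A x (bot D A) = bot D A" shows "x = tp A"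
proof -
  have "Le D A (tp A) x"
  proof (rule le_via_cc[OF tp_pr x])
    fix Q c assume h: "hom D c Q A" and cx: "Re D c x = bot D Q"
    have "Re D c (imp A x (bot D A)) = imp Q (bot D Q) (bot D Q)"
      using imp_re'[OF h x bot_pr] cx re_bot[OF h] by simp
    hence "Re D c (bot D A) = tp Q" using e tp_def by simp
    thus "Re D c (tp A) = bot D Q" using re_tp[OF h] re_bot[OF h] by simp
  qed
  thus ?thesis using le_antisym[OF x tp_pr le_tp[OF x]] by blast
qed

lemma meet_tp: "y \<in> Pr D A \<Longrightarrow> meet D A y (tp A) = y"
  by (metis is_meet_def le_antisym le_refl le_tp meet_ex tp_pr)

lemma L2: assumes g: "\<gamma> \<in> Pr D A" and p: "\<phi> \<in> Pr D A"
  shows "Le D A \<gamma> (imp A \<phi> (meet D A \<gamma> \<phi>))"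
proof (rule le_via_cc[OF g])
  show "imp A \<phi> (meet D A \<gamma> \<phi>) \<in> Pr D A" using g p imp_pr meet_pr by blast
  fix Q c assume h: "hom D c Q A" and e: "Re D c (imp A \<phi> (meet D A \<gamma> \<phi>)) = bot D Q"
  let ?x = "Re D c \<phi>" and ?y = "Re D c \<gamma>"
  have xp: "?x \<in> Pr D Q" and yp: "?y \<in> Pr D Q" using h g p re_pr by blast+
  have e2: "imp Q ?x (meet D Q ?y ?x) = bot D Q"
    using e imp_re'[OF h p] re_meet[OF h g p] meet_pr[OF g p] by simp
  have mp': "meet D Q ?y ?x \<in> Pr D Q" using xp yp meet_pr by blast
  have "Le D Q (meet D Q ?y ?x) (bot D Q)" using ax_a[OF mp' xp] e2 by simp
  hence m: "meet D Q ?y ?x = bot D Q" using mp' le_bot_eq by blast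
  hence "?x = tp Q" using L1 xp e2 by simp
  thus "?y = bot D Q" using m meet_tp yp by simp
qed

lemma heyt_imp: assumes x: "x \<in> Pr D A" and y: "y \<in> Pr D A" shows "is_imp D A x y (imp A x y)"
  unfolding is_imp_def
proof (intro conjI ballI iffI allI impI)
  show "imp A x y \<in> Pr D A" using x y imp_pr by blast
next
  fix w m assume w: "w \<in> Pr D A" and l: "Le D A w (imp A x y)" and m: "is_meet D A w x m"
  hence mq: "m \<in> Pr D A" "Le D A m w" "Le D A m x" unfolding is_meet_def by auto
  hence "Le D A m (imp A x y)" using le_trans w l x y imp_pr by blast
  thus "Le D A m y" using mp[OF x y mq(1)] mq(3) by blast
next
  fix w assume w: "w \<in> Pr D A" and H: "\<forall>m. is_meet D A w x m \<longrightarrow> Le D A m y"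
  have "Le D A (meet D A w x) y" using H meet_ex w x by blast
  hence "Le D A (imp A x (meet D A w x)) (imp A x y)" using mono2 meet_pr w x y by blast
  thus "Le D A w (imp A x y)" using L2[OF w x] le_trans w x y imp_pr meet_pr by meson
qed

definition ng where "ng A x = imp A x (bot D A)"
definition jn where "jn A x y = imp A (ng A x) y"
lemma ng_pr: "x \<in> Pr D A \<Longrightarrow> ng A x \<in> Pr D A" by (simp add: ng_def imp_pr)
lemma jn_pr: "x \<in> Pr D A \<Longrightarrow> y \<in> Pr D A \<Longrightarrow> jn A x y \<in> Pr D A" by (simp add: jn_def imp_pr ng_pr)

lemma is_join_jn: assumes x: "x \<in> Pr D A" and y: "y \<in> Pr D A" shows "is_join D A x y (jn A x y)"
  unfolding is_join_def
proof (intro conjI ballI impI)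
  show "jn A x y \<in> Pr D A" using jn_pr x y by blast
  show "Le D A y (jn A x y)" unfolding jn_def using ax_a ng_pr x y by blast
  have "\<forall>m. is_meet D A x (ng A x) m \<longrightarrow> Le D A m y"
  proof (intro allI impI)
    fix m assume "is_meet D A x (ng A x) m"
    hence m: "m \<in> Pr D A" "Le D A m x" "Le D A m (ng A x)" unfolding is_meet_def by auto
    hence "Le D A m (bot D A)" using mp x unfolding ng_def by (meson bot_pr)
    thus "Le D A m y" using m le_trans bot_le y bot_pr by blast
  qed
  thus "Le D A x (jn A x y)" using heyt_imp[OF ng_pr[OF x] y] x unfolding is_imp_def jn_def by blast
next
  fix z assume z: "z \<in> Pr D A" and l: "Le D A x z \<and> Le D A y z"
  show "Le D A (jn A x y) z"
  proof (rule le_via_cc[OF jn_pr[OF x y] z])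
    fix Q c assume h: "hom D c Q A" and cz: "Re D c z = bot D Q"
    have "Le D Q (Re D c x) (bot D Q)" using re_mono[OF h x z] l cz by simp
    hence cx: "Re D c x = bot D Q" using le_bot_eq h x re_pr by blast
    have "Le D Q (Re D c y) (bot D Q)" using re_mono[OF h y z] l cz by simp
    hence cy: "Re D c y = bot D Q" using le_bot_eq h y re_pr by blast
    have "Re D c (jn A x y) = imp Q (imp Q (bot D Q) (bot D Q)) (bot D Q)"
      unfolding jn_def ng_def using imp_re'[OF h] cx cy re_bot[OF h] x y bot_pr imp_pr by simp
    thus "Re D c (jn A x y) = bot D Q" using imp_bot_bot tp_def by simp
  qed
qed

lemma nn: assumes x: "x \<in> Pr D A" shows "Le D A (ng A (ng A x)) x"
proof (rule le_via_cc[OF ng_pr[OF ng_pr[OF x]] x])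
  fix Q c assume h: "hom D c Q A" and cx: "Re D c x = bot D Q"
  have "Re D c (ng A (ng A x)) = imp Q (imp Q (bot D Q) (bot D Q)) (bot D Q)"
    unfolding ng_def using imp_re'[OF h] cx re_bot[OF h] x bot_pr imp_pr by simp
  thus "Re D c (ng A (ng A x)) = bot D Q" using imp_bot_bot tp_def by simp
qed

lemma heyting: "heyting D A"
  unfolding heyting_def using is_top_tp bot meet_ex is_join_jn heyt_imp by blast

lemma hhom: "heyting_hom D f"
proof -
  let ?A = "ccod D f" and ?B = "cdom D f"
  have h: "hom D f ?B ?A" by (simp add: hom_def)
  show ?thesis unfolding heyting_hom_def Let_def
  proof (intro conjI allI impI ballI)
    fix t assume "is_top D ?A t" hence "t = tp ?A" using top_uniq is_top_tp by blast
    thus "is_top D ?B (Re D f t)" using re_tp[OF h] is_top_tp by simp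
  next
    fix t assume "is_bot D ?A t" hence "t = bot D ?A" using bot_is by simp
    thus "is_bot D ?B (Re D f t)" using re_bot[OF h] bot by simp
  next
    fix x y z assume x: "x \<in> Pr D ?A" and y: "y \<in> Pr D ?A"
    { assume "is_meet D ?A x y z" hence "z = meet D ?A x y" using meet_is by simp
      thus "is_meet D ?B (Re D f x) (Re D f y) (Re D f z)"
        using re_meet[OF h x y] meet_ex h x y re_pr by metis }
    { assume "is_join D ?A x y z" hence "z = jn ?A x y" using join_uniq is_join_jn x y by blast
      moreover have "Re D f (jn ?A x y) = jn ?B (Re D f x) (Re D f y)"
        unfolding jn_def ng_def using imp_re'[OF h] re_bot[OF h] x y bot_pr imp_pr by simp
      ultimately show "is_join D ?B (Re D f x) (Re D f y) (Re D f z)"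
        using is_join_jn h x y re_pr by metis }
    { assume "is_imp D ?A x y z" hence "z = imp ?A x y" using imp_uniq heyt_imp x y by blast
      thus "is_imp D ?B (Re D f x) (Re D f y) (Re D f z)"
        using imp_re'[OF h x y] heyt_imp h x y re_pr by metis }
  qed
qed

end

context hi begin

lemma ng_anti: assumes a: "a \<in> Pr D A" and b: "b \<in> Pr D A" and l: "Le D A b a"
  shows "Le D A (ng A a) (ng A b)"
proof -
  have "\<forall>m. is_meet D A (ng A a) b m \<longrightarrow> Le D A m (bot D A)"
  proof (intro allI impI)
    fix m assume "is_meet D A (ng A a) b m"
    hence m: "m \<in> Pr D A" "Le D A m (ng A a)" "Le D A m b" unfolding is_meet_def by auto
    have "Le D A m a" using le_trans[OF m(1) b a] m l by blast
    thus "Le D A m (bot D A)" using mp[OF a bot_pr m(1)] m unfolding ng_def by blast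
  qed
  thus ?thesis using heyt_imp[OF b bot_pr] ng_pr[OF a] unfolding is_imp_def ng_def by blast
qed

lemma ngng: assumes a: "a \<in> Pr D A" shows "ng A (ng A a) = a"
proof -
  have "\<forall>m. is_meet D A a (ng A a) m \<longrightarrow> Le D A m (bot D A)"
  proof (intro allI impI)
    fix m assume "is_meet D A a (ng A a) m"
    hence m: "m \<in> Pr D A" "Le D A m (ng A a)" "Le D A m a" unfolding is_meet_def by auto
    thus "Le D A m (bot D A)" using mp[OF a bot_pr m(1)] m unfolding ng_def by blast
  qed
  hence "Le D A a (ng A (ng A a))"
    using heyt_imp[OF ng_pr[OF a] bot_pr] a unfolding is_imp_def ng_def by blast
  thus ?thesis using nn[OF a] le_antisym a ng_pr by blast
qed

lemma ng_le_iff: "a \<in> Pr D A \<Longrightarrow> b \<in> Pr D A \<Longrightarrow> Le D A (ng A a) (ng A b) \<longleftrightarrow> Le D A b a"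
  by (metis ng_anti ng_pr ngng)
lemma le_ng_iff: "a \<in> Pr D A \<Longrightarrow> b \<in> Pr D A \<Longrightarrow> Le D A a (ng A b) \<longleftrightarrow> Le D A b (ng A a)"
  by (metis ng_anti ng_pr ngng)
lemma ng_le_iff2: "a \<in> Pr D A \<Longrightarrow> b \<in> Pr D A \<Longrightarrow> Le D A (ng A a) b \<longleftrightarrow> Le D A (ng A b) a"
  by (metis ng_anti ng_pr ngng)

lemma re_ng: "hom D f X A \<Longrightarrow> x \<in> Pr D A \<Longrightarrow> Re D f (ng A x) = ng X (Re D f x)"
  unfolding ng_def using imp_re' re_bot bot_pr by metis

lemma negR: assumes h: "hom D f B A" and ad: "is_ladj D A B (Re D f) R"
  shows "is_ladj D B A (\<lambda>\<psi>. ng A (R (ng B \<psi>))) (Re D f)"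
  unfolding is_ladj_def
proof (intro conjI ballI)
  have R: "\<And>y. y \<in> Pr D B \<Longrightarrow> R y \<in> Pr D A" using ad unfolding is_ladj_def by blast
  fix x assume x: "x \<in> Pr D B"
  show "ng A (R (ng B x)) \<in> Pr D A" using R ng_pr x by blast
next
  fix y assume "y \<in> Pr D A" thus "Re D f y \<in> Pr D B" using h re_pr by blast
next
  have R: "\<And>y. y \<in> Pr D B \<Longrightarrow> R y \<in> Pr D A" using ad unfolding is_ladj_def by blast
  fix x y assume x: "x \<in> Pr D B" and y: "y \<in> Pr D A"
  have nx: "ng B x \<in> Pr D B" using ng_pr x by blast
  have fy: "Re D f y \<in> Pr D B" using h re_pr y by blast
  have "Le D A (ng A (R (ng B x))) y \<longleftrightarrow> Le D A (ng A y) (R (ng B x))"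
    using ng_le_iff2 R nx y by blast
  also have "\<dots> \<longleftrightarrow> Le D B (Re D f (ng A y)) (ng B x)"
    using ad nx ng_pr y unfolding is_ladj_def by blast
  also have "\<dots> \<longleftrightarrow> Le D B (ng B (Re D f y)) (ng B x)" using re_ng h y by simp
  also have "\<dots> \<longleftrightarrow> Le D B x (Re D f y)" using ng_le_iff fy x by blast
  finally show "Le D A (ng A (R (ng B x))) y = Le D B x (Re D f y)" .
qed

lemma negL: assumes h: "hom D f B A" and ad: "is_ladj D B A L (Re D f)"
  shows "is_ladj D A B (Re D f) (\<lambda>\<gamma>. ng A (L (ng B \<gamma>)))"
  unfolding is_ladj_def
proof (intro conjI ballI)
  have L: "\<And>y. y \<in> Pr D B \<Longrightarrow> L y \<in> Pr D A" using ad unfolding is_ladj_def by blast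
  fix x assume x: "x \<in> Pr D B"
  show "ng A (L (ng B x)) \<in> Pr D A" using L ng_pr x by blast
next
  fix y assume "y \<in> Pr D A" thus "Re D f y \<in> Pr D B" using h re_pr by blast
next
  have L: "\<And>y. y \<in> Pr D B \<Longrightarrow> L y \<in> Pr D A" using ad unfolding is_ladj_def by blast
  fix x y assume x: "x \<in> Pr D A" and y: "y \<in> Pr D B"
  have ny: "ng B y \<in> Pr D B" using ng_pr y by blast
  have fx: "Re D f x \<in> Pr D B" using h re_pr x by blast
  have "Le D A x (ng A (L (ng B y))) \<longleftrightarrow> Le D A (L (ng B y)) (ng A x)"
    using le_ng_iff L ny x by blast
  also have "\<dots> \<longleftrightarrow> Le D B (ng B y) (Re D f (ng A x))"
    using ad ny ng_pr x unfolding is_ladj_def by blast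
  also have "\<dots> \<longleftrightarrow> Le D B (ng B y) (ng B (Re D f x))" using re_ng h x by simp
  also have "\<dots> \<longleftrightarrow> Le D B (Re D f x) y" using ng_le_iff fx y by blast
  finally show "Le D B (Re D f x) y = Le D A x (ng A (L (ng B y)))" by simp
qed

lemma pair_pr_id: "pair D (pr1 D X A) (pr2 D X A) = cid D (prd D X A)"
  using pair_eta[OF hom_id] comp_id_r[OF hom_pr1] comp_id_r[OF hom_pr2] by metis

lemma iso_adj: assumes f: "hom D f X Y" and g: "hom D g Y X" and gf: "comp D g f = cid D X"
  and fg: "comp D f g = cid D Y" and u: "u \<in> Pr D Y" and y: "y \<in> Pr D X"
  shows "Le D X (Re D f u) y \<longleftrightarrow> Le D Y u (Re D g y)"
proof
  assume "Le D X (Re D f u) y"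
  hence "Le D Y (Re D g (Re D f u)) (Re D g y)" using re_mono g f u y re_pr by blast
  moreover have "Re D g (Re D f u) = u" using re_comp[OF g f u] fg re_id u by simp
  ultimately show "Le D Y u (Re D g y)" by simp
next
  assume "Le D Y u (Re D g y)"
  hence "Le D X (Re D f u) (Re D f (Re D g y))" using re_mono g f u y re_pr by blast
  moreover have "Re D f (Re D g y) = y" using re_comp[OF f g y] gf re_id y by simp
  ultimately show "Le D X (Re D f u) y" by simp
qed

lemma pi_pr2: "\<exists>R. is_ladj D A (prd D X A) (Re D (pr2 D X A)) R"
  using imp_pi by blast

lemma pi_pr1: "\<exists>R. is_ladj D X (prd D X A) (Re D (pr1 D X A)) R"
proof -
  obtain R where ad: "is_ladj D X (prd D A X) (Re D (pr2 D A X)) R" using pi_pr2 by blast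
  have e: "\<And>x. x \<in> Pr D X \<Longrightarrow> Re D (pr1 D X A) x = Re D (sw X A) (Re D (pr2 D A X) x)"
    using re_comp[OF hom_sw hom_pr2] sw_pr2 by metis
  have "is_ladj D X (prd D X A) (Re D (pr1 D X A)) (\<lambda>y. R (Re D (sw A X) y))"
    unfolding is_ladj_def
  proof (intro conjI ballI)
    fix x assume "x \<in> Pr D X" thus "Re D (pr1 D X A) x \<in> Pr D (prd D X A)" using re_pr hom_pr1 by blast
  next
    fix y assume "y \<in> Pr D (prd D X A)"
    thus "R (Re D (sw A X) y) \<in> Pr D X" using ad re_pr hom_sw unfolding is_ladj_def by blast
  next
    fix x y assume x: "x \<in> Pr D X" and y: "y \<in> Pr D (prd D X A)"
    have px: "Re D (pr2 D A X) x \<in> Pr D (prd D A X)" using re_pr hom_pr2 x by blast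
    have sy: "Re D (sw A X) y \<in> Pr D (prd D A X)" using re_pr hom_sw y by blast
    have "Le D (prd D X A) (Re D (pr1 D X A) x) y \<longleftrightarrow> Le D (prd D A X) (Re D (pr2 D A X) x) (Re D (sw A X) y)"
      using e[OF x] iso_adj[OF hom_sw hom_sw sw_sw sw_sw px y] by simp
    also have "\<dots> \<longleftrightarrow> Le D X x (R (Re D (sw A X) y))" using ad x sy unfolding is_ladj_def by blast
    finally show "Le D (prd D X A) (Re D (pr1 D X A) x) y = Le D X x (R (Re D (sw A X) y))" .
  qed
  thus ?thesis by blast
qed

lemma proj_hom: "projection D f \<Longrightarrow> hom D f (cdom D f) (ccod D f)" by (simp add: hom_def)

lemma pi_proj: "projection D f \<Longrightarrow> \<exists>R. is_ladj D (ccod D f) (cdom D f) (Re D f) R"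
  unfolding projection_def using pi_pr1 pi_pr2 hom_pr1 hom_pr2 unfolding hom_def by metis

lemma sig_proj: "projection D f \<Longrightarrow> \<exists>L. is_ladj D (cdom D f) (ccod D f) L (Re D f)"
  using pi_proj negR proj_hom by blast

definition Sg where "Sg f = (SOME L. is_ladj D (cdom D f) (ccod D f) L (Re D f))"
definition Pp where "Pp f = (SOME R. is_ladj D (ccod D f) (cdom D f) (Re D f) R)"

lemma Sg: "projection D f \<Longrightarrow> is_ladj D (cdom D f) (ccod D f) (Sg f) (Re D f)"
  unfolding Sg_def using sig_proj someI_ex by metis
lemma Pp: "projection D f \<Longrightarrow> is_ladj D (ccod D f) (cdom D f) (Re D f) (Pp f)"
  unfolding Pp_def using pi_proj someI_ex by metis
lemma Pp_Sg: "projection D f \<Longrightarrow> \<gamma> \<in> Pr D (cdom D f) \<Longrightarrow>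
   Pp f \<gamma> = ng (ccod D f) (Sg f (ng (cdom D f) \<gamma>))"
  using ladj_uniqR[OF Pp negL[OF proj_hom Sg]] by blast

end

locale hi2 = hi D cc imp for D :: "('o,'a,'p) doctrine" and cc imp +
  fixes \<delta> eps1 eps2
  assumes elem: "elementary_with D \<delta>" and ac: "AC D eps1 eps2" and ho: "higher_order D"
begin

lemma init_arrow: assumes si: "stable_initial D Y" and t: "hom D t Q Y" shows "is_initial D Q"
proof -
  have iY: "is_initial D Y" using si unfolding stable_initial_def by blast
  obtain a b where a: "hom D a (prd D Q Y) Y" and b: "hom D b Y (prd D Q Y)"
    and ba: "comp D b a = cid D (prd D Q Y)"
    using si unfolding stable_initial_def iso_def by blast
  have iQY: "is_initial D (prd D Q Y)" unfolding is_initial_def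
  proof
    fix Z
    obtain c where c: "hom D c Y Z" using iY unfolding is_initial_def by blast
    show "\<exists>!f. hom D f (prd D Q Y) Z"
    proof (rule ex1I)
      show "hom D (comp D c a) (prd D Q Y) Z" using hom_comp a c by blast
    next
      fix p assume p: "hom D p (prd D Q Y) Z"
      have "comp D p b = comp D c b \<or> True" by simp
      have pb: "comp D p b = c" using iY hom_comp[OF b p] c unfolding is_initial_def by blast
      have "p = comp D p (comp D b a)" using ba comp_id_r p by simp
      also have "\<dots> = comp D (comp D p b) a" using comp_assoc[OF a b p] .
      finally show "p = comp D c a" using pb by simp
    qed
  qed
  let ?s = "pair D (cid D Q) t"
  have s: "hom D ?s Q (prd D Q Y)" using hom_pair hom_id t by blast
  have ps: "comp D (pr1 D Q Y) ?s = cid D Q" using pr1_pair hom_id t by blast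
  show ?thesis unfolding is_initial_def
  proof
    fix Z
    obtain e where e: "hom D e (prd D Q Y) Z" using iQY unfolding is_initial_def by blast
    show "\<exists>!f. hom D f Q Z"
    proof (rule ex1I)
      show "hom D (comp D e ?s) Q Z" using hom_comp s e by blast
    next
      fix p assume p: "hom D p Q Z"
      have pe: "comp D p (pr1 D Q Y) = e" using iQY hom_comp[OF hom_pr1 p] e unfolding is_initial_def by blast
      have "p = comp D p (comp D (pr1 D Q Y) ?s)" using ps comp_id_r p by simp
      also have "\<dots> = comp D (comp D p (pr1 D Q Y)) ?s" using comp_assoc[OF s hom_pr1 p] .
      finally show "p = comp D e ?s" using pe by simp
    qed
  qed
qed

lemma triv: assumes si: "stable_initial D Y" and t: "hom D t T Y"
  and a: "\<alpha> \<in> Pr D T" and b: "\<beta> \<in> Pr D T" shows "Le D T \<alpha> \<beta>"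
proof -
  let ?Oa = "cdom D (cc T \<alpha>)" and ?Ob = "cdom D (cc T \<beta>)"
  have ca: "hom D (cc T \<alpha>) ?Oa T" using cc_hom a by blast
  have cb: "hom D (cc T \<beta>) ?Ob T" using cc_hom b by blast
  have ia: "is_initial D ?Oa" using init_arrow[OF si hom_comp[OF ca t]] .
  have ib: "is_initial D ?Ob" using init_arrow[OF si hom_comp[OF cb t]] .
  obtain h where h: "hom D h ?Ob ?Oa" using ib unfolding is_initial_def by blast
  have "comp D (cc T \<alpha>) h = cc T \<beta>" using ib hom_comp[OF h ca] cb unfolding is_initial_def by blast
  thus ?thesis using fcc a b h unfolding full_cc_def by blast
qed

lemma pb_facts: assumes "is_pullback D h g f k"
  shows "hom D h (cdom D h) (ccod D f)" "hom D g (cdom D k) (cdom D h)" "hom D f (cdom D f) (ccod D f)"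
    "hom D k (cdom D k) (cdom D f)" "comp D h g = comp D f k"
  using assms unfolding is_pullback_def hom_def by auto

lemma bc_ge: assumes pg: "projection D g" and pf: "projection D f" and pb: "is_pullback D h g f k"
  and \<gamma>: "\<gamma> \<in> Pr D (cdom D f)"
  shows "Le D (cdom D h) (Sg g (Re D k \<gamma>)) (Re D h (Sg f \<gamma>))"
proof -
  note F = pb_facts[OF pb]
  have cg: "cdom D g = cdom D k" "ccod D g = cdom D h" using F(2) unfolding hom_def by auto
  have Sf: "is_ladj D (cdom D f) (ccod D f) (Sg f) (Re D f)" using Sg pf by blast
  have Sgg: "is_ladj D (cdom D k) (cdom D h) (Sg g) (Re D g)" using Sg pg cg by metis
  have sfg: "Sg f \<gamma> \<in> Pr D (ccod D f)" using Sf \<gamma> unfolding is_ladj_def by blast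
  have u: "Le D (cdom D f) \<gamma> (Re D f (Sg f \<gamma>))" using Sf \<gamma> sfg le_refl unfolding is_ladj_def by blast
  have kg: "Re D k \<gamma> \<in> Pr D (cdom D k)" using re_pr F(4) \<gamma> by blast
  have hs: "Re D h (Sg f \<gamma>) \<in> Pr D (cdom D h)" using re_pr F(1) sfg by blast
  have "Re D g (Re D h (Sg f \<gamma>)) = Re D (comp D h g) (Sg f \<gamma>)" using re_comp[OF F(2) F(1) sfg] by simp
  also have "\<dots> = Re D k (Re D f (Sg f \<gamma>))" using F(5) re_comp[OF F(4) F(3) sfg] by simp
  finally have "Le D (cdom D k) (Re D k \<gamma>) (Re D g (Re D h (Sg f \<gamma>)))"
    using re_mono[OF F(4) \<gamma> _ u] re_pr F(3) sfg by simp
  thus ?thesis using Sgg kg hs unfolding is_ladj_def by blast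
qed

lemma bc_le_sec: assumes pg: "projection D g" and pf: "projection D f" and pb: "is_pullback D h g f k"
  and \<gamma>: "\<gamma> \<in> Pr D (cdom D f)" and s: "hom D s (ccod D f) (cdom D f)" and fs: "comp D f s = cid D (ccod D f)"
  and e: "Sg f \<gamma> = Re D s \<gamma>"
  shows "Le D (cdom D h) (Re D h (Sg f \<gamma>)) (Sg g (Re D k \<gamma>))"
proof -
  note F = pb_facts[OF pb]
  let ?Z = "cdom D h"
  have cg: "cdom D g = cdom D k" "ccod D g = cdom D h" using F(2) unfolding hom_def by auto
  have Sgg: "is_ladj D (cdom D k) (cdom D h) (Sg g) (Re D g)" using Sg pg cg by metis
  have sh: "hom D (comp D s h) ?Z (cdom D f)" using hom_comp F(1) s by blast
  have "comp D f (comp D s h) = comp D (comp D f s) h" using comp_assoc[OF F(1) s F(3)] .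
  also have "\<dots> = h" using fs comp_id_l F(1) by simp
  finally have fsh: "comp D f (comp D s h) = h" .
  have hid: "comp D h (cid D ?Z) = h" using comp_id_r F(1) by blast
  have "\<exists>!w. hom D w (cdom D (cid D ?Z)) (cdom D g) \<and> comp D g w = cid D ?Z \<and> comp D k w = comp D s h"
    using pb unfolding is_pullback_def
    apply (elim conjE)
    apply (erule allE[of _ "cid D ?Z"], erule allE[of _ "comp D s h"])
    using hom_id sh fsh hid F(3) unfolding hom_def by simp
  then obtain w where w: "hom D w ?Z (cdom D k)" and gw: "comp D g w = cid D ?Z"
    and kw: "comp D k w = comp D s h" using hom_id cg unfolding hom_def by auto
  have kg: "Re D k \<gamma> \<in> Pr D (cdom D k)" using re_pr F(4) \<gamma> by blast
  have sg: "Sg g (Re D k \<gamma>) \<in> Pr D ?Z" using Sgg kg unfolding is_ladj_def by blast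
  have u: "Le D (cdom D k) (Re D k \<gamma>) (Re D g (Sg g (Re D k \<gamma>)))"
    using Sgg kg sg le_refl unfolding is_ladj_def by blast
  have "Re D h (Sg f \<gamma>) = Re D (comp D s h) \<gamma>" using e re_comp[OF F(1) s \<gamma>] by simp
  also have "\<dots> = Re D w (Re D k \<gamma>)" using kw re_comp[OF w F(4) \<gamma>] by simp
  finally have 1: "Re D h (Sg f \<gamma>) = Re D w (Re D k \<gamma>)" .
  have "Re D w (Re D g (Sg g (Re D k \<gamma>))) = Sg g (Re D k \<gamma>)"
    using re_comp[OF w F(2) sg] gw re_id sg by simp
  thus ?thesis using 1 re_mono[OF w kg _ u] re_pr F(2) sg by simp
qed

lemma sg_bot: assumes pf: "projection D f" shows "Sg f (bot D (cdom D f)) = bot D (ccod D f)"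
proof -
  have Sf: "is_ladj D (cdom D f) (ccod D f) (Sg f) (Re D f)" using Sg pf by blast
  have "is_bot D (ccod D f) (Sg f (bot D (cdom D f)))"
    unfolding is_bot_def using Sf bot_le bot_pr re_pr proj_hom[OF pf] unfolding is_ladj_def by blast
  thus ?thesis using bot_is by simp
qed

lemma bc_le: assumes pg: "projection D g" and pf: "projection D f" and pb: "is_pullback D h g f k"
  and \<gamma>: "\<gamma> \<in> Pr D (cdom D f)"
  shows "Le D (cdom D h) (Re D h (Sg f \<gamma>)) (Sg g (Re D k \<gamma>))"
proof -
  note F = pb_facts[OF pb]
  have cg: "cdom D g = cdom D k" "ccod D g = cdom D h" using F(2) unfolding hom_def by auto
  have Sgg: "is_ladj D (cdom D k) (cdom D h) (Sg g) (Re D g)" using Sg pg cg by metis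
  have kg: "Re D k \<gamma> \<in> Pr D (cdom D k)" using re_pr F(4) \<gamma> by blast
  have sg: "Sg g (Re D k \<gamma>) \<in> Pr D (cdom D h)" using Sgg kg unfolding is_ladj_def by blast
  have degen: "Le D (cdom D h) (Re D h (Sg f \<gamma>)) (Sg g (Re D k \<gamma>))"
    if tr: "\<And>a b. a \<in> Pr D (cdom D f) \<Longrightarrow> b \<in> Pr D (cdom D f) \<Longrightarrow> Le D (cdom D f) a b"
  proof -
    have "\<gamma> = bot D (cdom D f)" using tr \<gamma> le_bot_eq bot_pr by blast
    hence "Re D h (Sg f \<gamma>) = bot D (cdom D h)" using sg_bot[OF pf] re_bot F(1) by simp
    thus ?thesis using bot_le sg by simp
  qed
  obtain X Y where "f = pr1 D X Y \<or> f = pr2 D X Y" using pf unfolding projection_def by blast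
  thus ?thesis
  proof
    assume f: "f = pr1 D X Y"
    have df: "cdom D f = prd D X Y" "ccod D f = X" using f hom_pr1[of X Y] unfolding hom_def by auto
    show ?thesis
    proof (cases "stable_initial D Y")
      case True
      thus ?thesis using degen triv[OF True hom_pr2] df by simp
    next
      case False
      have \<gamma>': "\<gamma> \<in> Pr D (prd D X Y)" using \<gamma> df by simp
      let ?s = "pair D (cid D X) (eps1 X Y \<gamma>)"
      have he: "hom D (eps1 X Y \<gamma>) X Y" using ac False \<gamma>' unfolding AC_def by blast
      have L: "is_ladj D (prd D X Y) X (\<lambda>\<psi>. Re D (pair D (cid D X) (eps1 X Y \<psi>)) \<psi>) (Re D (pr1 D X Y))"
        using ac False unfolding AC_def by blast
      have "Sg f \<gamma> = Re D ?s \<gamma>" using ladj_uniqL[OF Sg[OF pf] _ \<gamma>] L f df by simp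
      moreover have "hom D ?s (ccod D f) (cdom D f)" using hom_pair hom_id he df by simp
      moreover have "comp D f ?s = cid D (ccod D f)" using pr1_pair[OF hom_id he] df f by simp
      ultimately show ?thesis using bc_le_sec[OF pg pf pb \<gamma>] by blast
    qed
  next
    assume f: "f = pr2 D X Y"
    have df: "cdom D f = prd D X Y" "ccod D f = Y" using f hom_pr2[of X Y] unfolding hom_def by auto
    show ?thesis
    proof (cases "stable_initial D X")
      case True
      thus ?thesis using degen triv[OF True hom_pr1] df by simp
    next
      case False
      have \<gamma>': "\<gamma> \<in> Pr D (prd D X Y)" using \<gamma> df by simp
      let ?s = "pair D (eps2 X Y \<gamma>) (cid D Y)"
      have he: "hom D (eps2 X Y \<gamma>) Y X" using ac False \<gamma>' unfolding AC_def by blast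
      have L: "is_ladj D (prd D X Y) Y (\<lambda>\<psi>. Re D (pair D (eps2 X Y \<psi>) (cid D Y)) \<psi>) (Re D (pr2 D X Y))"
        using ac False unfolding AC_def by blast
      have "Sg f \<gamma> = Re D ?s \<gamma>" using ladj_uniqL[OF Sg[OF pf] _ \<gamma>] L f df by simp
      moreover have "hom D ?s (ccod D f) (cdom D f)" using hom_pair hom_id he df by simp
      moreover have "comp D f ?s = cid D (ccod D f)" using pr2_pair[OF he hom_id] df f by simp
      ultimately show ?thesis using bc_le_sec[OF pg pf pb \<gamma>] by blast
    qed
  qed
qed

lemma bc_sig: assumes pg: "projection D g" and pf: "projection D f" and pb: "is_pullback D h g f k"
  and \<gamma>: "\<gamma> \<in> Pr D (cdom D f)"
  shows "Re D h (Sg f \<gamma>) = Sg g (Re D k \<gamma>)"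
proof -
  note F = pb_facts[OF pb]
  have cg: "cdom D g = cdom D k" "ccod D g = cdom D h" using F(2) unfolding hom_def by auto
  have Sgg: "is_ladj D (cdom D k) (cdom D h) (Sg g) (Re D g)" using Sg pg cg by metis
  have kg: "Re D k \<gamma> \<in> Pr D (cdom D k)" using re_pr F(4) \<gamma> by blast
  have sg: "Sg g (Re D k \<gamma>) \<in> Pr D (cdom D h)" using Sgg kg unfolding is_ladj_def by blast
  have sfg: "Sg f \<gamma> \<in> Pr D (ccod D f)" using Sg[OF pf] \<gamma> unfolding is_ladj_def by blast
  have hs: "Re D h (Sg f \<gamma>) \<in> Pr D (cdom D h)" using re_pr F(1) sfg by blast
  show ?thesis using le_antisym[OF hs sg bc_le[OF assms] bc_ge[OF assms]] .
qed

lemma bc_pi: assumes pg: "projection D g" and pf: "projection D f" and pb: "is_pullback D h g f k"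
  and \<gamma>: "\<gamma> \<in> Pr D (cdom D f)"
  shows "Re D h (Pp f \<gamma>) = Pp g (Re D k \<gamma>)"
proof -
  note F = pb_facts[OF pb]
  have cg: "cdom D g = cdom D k" "ccod D g = cdom D h" using F(2) unfolding hom_def by auto
  have ng: "ng (cdom D f) \<gamma> \<in> Pr D (cdom D f)" using ng_pr \<gamma> by blast
  have sfg: "Sg f (ng (cdom D f) \<gamma>) \<in> Pr D (ccod D f)" using Sg[OF pf] ng unfolding is_ladj_def by blast
  have kg: "Re D k \<gamma> \<in> Pr D (cdom D k)" using re_pr F(4) \<gamma> by blast
  have "Re D h (Pp f \<gamma>) = ng (cdom D h) (Re D h (Sg f (ng (cdom D f) \<gamma>)))"
    using Pp_Sg[OF pf \<gamma>] re_ng[OF F(1) sfg] by simp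
  also have "\<dots> = ng (cdom D h) (Sg g (Re D k (ng (cdom D f) \<gamma>)))" using bc_sig[OF pg pf pb ng] by simp
  also have "\<dots> = ng (cdom D h) (Sg g (ng (cdom D k) (Re D k \<gamma>)))" using re_ng[OF F(4) \<gamma>] by simp
  also have "\<dots> = Pp g (Re D k \<gamma>)" using Pp_Sg[OF pg] kg cg by simp
  finally show ?thesis .
qed

end

context dc begin
lemma pair_ext: assumes u: "hom D u X (prd D A B)" and v: "hom D v X (prd D A B)"
  and 1: "comp D (pr1 D A B) u = comp D (pr1 D A B) v" and 2: "comp D (pr2 D A B) u = comp D (pr2 D A B) v"
  shows "u = v"
  using pair_eta[OF u] pair_eta[OF v] 1 2 by simp

lemma sec_refl: assumes f: "hom D f X Y" and s: "hom D s Y X" and fs: "comp D f s = cid D Y"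
  and a: "a \<in> Pr D Y" and b: "b \<in> Pr D Y" and l: "Le D X (Re D f a) (Re D f b)"
  shows "Le D Y a b"
proof -
  have "Le D Y (Re D s (Re D f a)) (Re D s (Re D f b))" using re_mono[OF s _ _ l] re_pr f a b by blast
  moreover have "\<And>z. z \<in> Pr D Y \<Longrightarrow> Re D s (Re D f z) = z" using re_comp[OF s f] fs re_id by simp
  ultimately show ?thesis using a b by simp
qed
end

context hi2 begin

lemma meet_tp': "y \<in> Pr D A \<Longrightarrow> meet D A (tp A) y = y"
  by (metis is_meet_def le_antisym le_refl le_tp meet_ex tp_pr)

lemma delta: "\<delta> A \<in> Pr D (prd D A A) \<and> (\<forall>\<alpha>\<in>Pr D (prd D A A).
   Le D A (top D A) (Re D (pair D (cid D A) (cid D A)) \<alpha>) \<longleftrightarrow> Le D (prd D A A) (\<delta> A) \<alpha>)"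
proof -
  let ?XA = "prd D A A"
  let ?XAA = "prd D ?XA A"
  define p2 where "p2 = comp D (pr2 D A A) (pr1 D ?XA A)"
  define q where "q = pair D p2 (pr2 D ?XA A)"
  define r where "r = pair D (cid D ?XA) (pr2 D A A)"
  define dA where "dA = pair D (cid D A) (cid D A)"
  define s where "s = pair D (pair D (pr1 D A A) (pr1 D A A)) (pr2 D A A)"
  have dpr: "\<delta> A \<in> Pr D ?XA" using elem unfolding elementary_with_def by blast
  have L: "is_ladj D ?XA ?XAA (\<lambda>\<psi>. meet D ?XAA (Re D (pr1 D ?XA A) \<psi>) (Re D q (\<delta> A))) (Re D r)"
    using elem unfolding elementary_with_def Let_def p2_def q_def r_def by blast
  have hp1: "hom D (pr1 D ?XA A) ?XAA ?XA" by (rule hom_pr1)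
  have hp2': "hom D (pr2 D ?XA A) ?XAA A" by (rule hom_pr2)
  have hpA1: "hom D (pr1 D A A) ?XA A" by (rule hom_pr1)
  have hpA2: "hom D (pr2 D A A) ?XA A" by (rule hom_pr2)
  have hp2: "hom D p2 ?XAA A" unfolding p2_def using hom_comp[OF hp1 hpA2] .
  have hq: "hom D q ?XAA ?XA" unfolding q_def using hom_pair[OF hp2 hp2'] .
  have hr: "hom D r ?XA ?XAA" unfolding r_def using hom_pair[OF hom_id hpA2] .
  have hd: "hom D dA A ?XA" unfolding dA_def using hom_pair[OF hom_id hom_id] .
  have hpp: "hom D (pair D (pr1 D A A) (pr1 D A A)) ?XA ?XA" using hom_pair[OF hpA1 hpA1] .
  have hs: "hom D s ?XA ?XAA" unfolding s_def using hom_pair[OF hpp hpA2] .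
  have q1: "comp D (pr1 D A A) q = p2" unfolding q_def using pr1_pair[OF hp2 hp2'] .
  have q2: "comp D (pr2 D A A) q = pr2 D ?XA A" unfolding q_def using pr2_pair[OF hp2 hp2'] .
  have r1: "comp D (pr1 D ?XA A) r = cid D ?XA" unfolding r_def using pr1_pair[OF hom_id hpA2] .
  have r2: "comp D (pr2 D ?XA A) r = pr2 D A A" unfolding r_def using pr2_pair[OF hom_id hpA2] .
  have s1': "comp D (pr1 D ?XA A) s = pair D (pr1 D A A) (pr1 D A A)" unfolding s_def using pr1_pair[OF hpp hpA2] .
  have s2': "comp D (pr2 D ?XA A) s = pr2 D A A" unfolding s_def using pr2_pair[OF hpp hpA2] .
  have qr1: "comp D (pr1 D A A) (comp D q r) = pr2 D A A"
  proof -
    have "comp D (pr1 D A A) (comp D q r) = comp D (comp D (pr1 D A A) q) r"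
      using comp_assoc[OF hr hq hpA1] .
    also have "\<dots> = comp D (pr2 D A A) (comp D (pr1 D ?XA A) r)"
      unfolding q1 p2_def using comp_assoc[OF hr hp1 hpA2] by simp
    also have "\<dots> = pr2 D A A" using r1 comp_id_r[OF hpA2] by simp
    finally show ?thesis .
  qed
  have qr2: "comp D (pr2 D A A) (comp D q r) = pr2 D A A"
    using comp_assoc[OF hr hq hpA2] q2 r2 by simp
  have d1: "comp D (pr1 D A A) (comp D dA (pr2 D A A)) = pr2 D A A"
    using comp_assoc[OF hpA2 hd hpA1] pr1_pair[OF hom_id hom_id] comp_id_l[OF hpA2] unfolding dA_def by simp
  have d2: "comp D (pr2 D A A) (comp D dA (pr2 D A A)) = pr2 D A A"
    using comp_assoc[OF hpA2 hd hpA2] pr2_pair[OF hom_id hom_id] comp_id_l[OF hpA2] unfolding dA_def by simp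
  have qrd: "comp D q r = comp D dA (pr2 D A A)"
    by (rule pair_ext[OF hom_comp[OF hr hq] hom_comp[OF hpA2 hd]]) (simp_all add: qr1 qr2 d1 d2)
  have s1: "comp D (pr1 D A A) (comp D q s) = pr1 D A A"
  proof -
    have "comp D (pr1 D A A) (comp D q s) = comp D (comp D (pr1 D A A) q) s"
      using comp_assoc[OF hs hq hpA1] .
    also have "\<dots> = comp D (pr2 D A A) (comp D (pr1 D ?XA A) s)"
      unfolding q1 p2_def using comp_assoc[OF hs hp1 hpA2] by simp
    also have "\<dots> = pr1 D A A" using s1' pr2_pair[OF hpA1 hpA1] by simp
    finally show ?thesis .
  qed
  have s2: "comp D (pr2 D A A) (comp D q s) = pr2 D A A"
    using comp_assoc[OF hs hq hpA2] q2 s2' by simp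
  have qs: "comp D q s = cid D ?XA"
    by (rule pair_ext[OF hom_comp[OF hs hq] hom_id]) (simp_all add: s1 s2 comp_id_r[OF hpA1] comp_id_r[OF hpA2])
  have pd: "comp D (pr2 D A A) dA = cid D A" unfolding dA_def using pr2_pair hom_id by blast
  show ?thesis
  proof (intro conjI ballI)
    show "\<delta> A \<in> Pr D (prd D A A)" using dpr by simp
  next
    fix \<alpha> assume a': "\<alpha> \<in> Pr D ?XA"
    have qa: "Re D q \<alpha> \<in> Pr D ?XAA" using re_pr hq a' by blast
    have qd: "Re D q (\<delta> A) \<in> Pr D ?XAA" using re_pr hq dpr by blast
    have da: "Re D dA \<alpha> \<in> Pr D A" using re_pr hd a' by blast
    have tt: "Re D (pr1 D ?XA A) (tp ?XA) = tp ?XAA" using re_tp[OF hp1] .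
    have "Le D ?XA (\<delta> A) \<alpha> \<longleftrightarrow> Le D ?XAA (Re D q (\<delta> A)) (Re D q \<alpha>)"
      using re_mono[OF hq dpr a'] sec_refl[OF hq hs qs dpr a'] by blast
    also have "Re D q (\<delta> A) = meet D ?XAA (Re D (pr1 D ?XA A) (tp ?XA)) (Re D q (\<delta> A))"
      using tt meet_tp'[OF qd] by simp
    also have "Le D ?XAA \<dots> (Re D q \<alpha>) \<longleftrightarrow> Le D ?XA (tp ?XA) (Re D r (Re D q \<alpha>))"
      using L tp_pr qa unfolding is_ladj_def by blast
    also have "Re D r (Re D q \<alpha>) = Re D (pr2 D A A) (Re D dA \<alpha>)"
      using re_comp[OF hr hq a'] re_comp[OF hpA2 hd a'] qrd by simp
    also have "Le D ?XA (tp ?XA) (Re D (pr2 D A A) (Re D dA \<alpha>)) \<longleftrightarrow> Le D A (tp A) (Re D dA \<alpha>)"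
    proof
      assume "Le D ?XA (tp ?XA) (Re D (pr2 D A A) (Re D dA \<alpha>))"
      hence "Le D ?XA (Re D (pr2 D A A) (tp A)) (Re D (pr2 D A A) (Re D dA \<alpha>))" using re_tp[OF hpA2] by simp
      thus "Le D A (tp A) (Re D dA \<alpha>)" using sec_refl[OF hpA2 hd pd tp_pr da] by simp
    next
      assume "Le D A (tp A) (Re D dA \<alpha>)"
      hence "Le D ?XA (Re D (pr2 D A A) (tp A)) (Re D (pr2 D A A) (Re D dA \<alpha>))"
        using re_mono[OF hpA2 tp_pr da] by simp
      thus "Le D ?XA (tp ?XA) (Re D (pr2 D A A) (Re D dA \<alpha>))" using re_tp[OF hpA2] by simp
    qed
    finally show "Le D A (top D A) (Re D (pair D (cid D A) (cid D A)) \<alpha>) = Le D (prd D A A) (\<delta> A) \<alpha>"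
      using top_eq dA_def by simp
  qed
qed

lemma is_tripos: "tripos D"
  unfolding tripos_def
proof (intro conjI)
  show "doctrine D" by (rule dc)
  show "\<forall>A. heyting D A" using heyting by blast
  show "\<forall>f. heyting_hom D f" using hhom by blast
  show "higher_order D" by (rule ho)
  show "\<exists>\<delta>. \<forall>X. \<delta> X \<in> Pr D (prd D X X) \<and> (\<forall>\<alpha>\<in>Pr D (prd D X X).
        Le D X (top D X) (Re D (pair D (cid D X) (cid D X)) \<alpha>) = Le D (prd D X X) (\<delta> X) \<alpha>)"
    using delta by blast
  show "\<exists>Sig Pi. (\<forall>f. projection D f \<longrightarrow>
           is_ladj D (cdom D f) (ccod D f) (Sig f) (Re D f) \<and>
           is_ladj D (ccod D f) (cdom D f) (Re D f) (Pi f)) \<and>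
        (\<forall>h g f k. projection D f \<and> projection D g \<and> is_pullback D h g f k \<longrightarrow>
           (\<forall>\<gamma>\<in>Pr D (cdom D f). Re D h (Sig f \<gamma>) = Sig g (Re D k \<gamma>) \<and>
                                 Re D h (Pi f \<gamma>) = Pi g (Re D k \<gamma>)))"
    using Sg Pp bc_sig bc_pi by blast
qed

end

locale tr = dc D for D :: "('o,'a,'p) doctrine" + assumes trip: "tripos D"
begin

lemma hey: "heyting D A" using trip unfolding tripos_def by blast
lemma hh: "heyting_hom D f" using trip unfolding tripos_def by blast

lemma meet_ex2: "x \<in> Pr D A \<Longrightarrow> y \<in> Pr D A \<Longrightarrow> is_meet D A x y (meet D A x y)"
proof -
  assume "x \<in> Pr D A" "y \<in> Pr D A"
  then obtain m where "is_meet D A x y m" using hey unfolding heyting_def by blast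
  thus ?thesis using meet_is by simp
qed
lemma meet_pr2: "x \<in> Pr D A \<Longrightarrow> y \<in> Pr D A \<Longrightarrow> meet D A x y \<in> Pr D A"
  using meet_ex2[of x A y] unfolding is_meet_def by blast

definition im where "im A x y = (SOME z. is_imp D A x y z)"
lemma im_is: "x \<in> Pr D A \<Longrightarrow> y \<in> Pr D A \<Longrightarrow> is_imp D A x y (im A x y)"
proof -
  assume "x \<in> Pr D A" "y \<in> Pr D A"
  then obtain z where "is_imp D A x y z" using hey unfolding heyting_def by blast
  thus ?thesis unfolding im_def by (rule someI)
qed
lemma im_pr: "x \<in> Pr D A \<Longrightarrow> y \<in> Pr D A \<Longrightarrow> im A x y \<in> Pr D A"
  using im_is[of x A y] unfolding is_imp_def by blast

lemma le_im: assumes w: "w \<in> Pr D A" and x: "x \<in> Pr D A" and y: "y \<in> Pr D A"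
  shows "Le D A w (im A x y) \<longleftrightarrow> Le D A (meet D A w x) y"
proof -
  have "Le D A w (im A x y) \<longleftrightarrow> (\<forall>m. is_meet D A w x m \<longrightarrow> Le D A m y)"
    using im_is[OF x y] w unfolding is_imp_def by blast
  also have "\<dots> \<longleftrightarrow> Le D A (meet D A w x) y" using meet_ex2[OF w x] meet_uniq by metis
  finally show ?thesis .
qed

lemma meet_le1: "x \<in> Pr D A \<Longrightarrow> y \<in> Pr D A \<Longrightarrow> Le D A (meet D A x y) x"
  using meet_ex2 unfolding is_meet_def by blast
lemma meet_le2: "x \<in> Pr D A \<Longrightarrow> y \<in> Pr D A \<Longrightarrow> Le D A (meet D A x y) y"
  using meet_ex2 unfolding is_meet_def by blast
lemma meet_gr: "x \<in> Pr D A \<Longrightarrow> y \<in> Pr D A \<Longrightarrow> z \<in> Pr D A \<Longrightarrow> Le D A z x \<Longrightarrow> Le D A z y \<Longrightarrow> Le D A z (meet D A x y)"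
  using meet_ex2 unfolding is_meet_def by blast

lemma mp2: assumes w: "w \<in> Pr D A" and x: "x \<in> Pr D A" and y: "y \<in> Pr D A"
  and l1: "Le D A w (im A x y)" and l2: "Le D A w x" shows "Le D A w y"
proof -
  have "Le D A (meet D A w x) y" using le_im w x y l1 by blast
  moreover have "Le D A w (meet D A w x)" using meet_gr[OF w x w le_refl[OF w] l2] .
  ultimately show ?thesis using le_trans meet_pr2 w x y by blast
qed

lemma re_im: assumes h: "hom D f X A" and x: "x \<in> Pr D A" and y: "y \<in> Pr D A"
  shows "Re D f (im A x y) = im X (Re D f x) (Re D f y)"
proof -
  have "is_imp D X (Re D f x) (Re D f y) (Re D f (im A x y))"
    using hh[of f] h x y im_is[OF x y] unfolding heyting_hom_def Let_def hom_def by blast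
  thus ?thesis using imp_uniq im_is re_pr h x y by blast
qed

lemma re_meet2: assumes h: "hom D f X A" and x: "x \<in> Pr D A" and y: "y \<in> Pr D A"
  shows "Re D f (meet D A x y) = meet D X (Re D f x) (Re D f y)"
proof -
  have "is_meet D X (Re D f x) (Re D f y) (Re D f (meet D A x y))"
    using hh[of f] h x y meet_ex2[OF x y] unfolding heyting_hom_def Let_def hom_def by blast
  thus ?thesis using meet_is by simp
qed

lemma yoneda: assumes a: "a \<in> Pr D A" and b: "b \<in> Pr D A"
  and H: "\<And>w. w \<in> Pr D A \<Longrightarrow> Le D A w a \<longleftrightarrow> Le D A w b" shows "a = b"
  using H a b le_refl le_antisym by blast

lemma frob: "\<exists>\<Pi>. is_ladj D A (prd D X A) (Re D (pr2 D X A)) \<Pi> \<and>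
        (\<forall>\<alpha>\<in>Pr D A. \<forall>\<beta>\<in>Pr D (prd D X A).
           \<Pi> (im (prd D X A) (Re D (pr2 D X A) \<alpha>) \<beta>) = im A \<alpha> (\<Pi> \<beta>))"
proof -
  let ?p = "pr2 D X A" and ?B = "prd D X A"
  have hp: "hom D ?p ?B A" by (rule hom_pr2)
  have pp: "projection D ?p" unfolding projection_def by blast
  obtain Pi where "\<forall>f. projection D f \<longrightarrow> is_ladj D (ccod D f) (cdom D f) (Re D f) (Pi f)"
    using trip unfolding tripos_def by blast
  hence ad: "is_ladj D A ?B (Re D ?p) (Pi ?p)" using pp hp unfolding hom_def by metis
  have Pp: "\<And>y. y \<in> Pr D ?B \<Longrightarrow> Pi ?p y \<in> Pr D A" using ad unfolding is_ladj_def by blast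
  have "\<forall>\<alpha>\<in>Pr D A. \<forall>\<beta>\<in>Pr D ?B. Pi ?p (im ?B (Re D ?p \<alpha>) \<beta>) = im A \<alpha> (Pi ?p \<beta>)"
  proof (intro ballI)
    fix \<alpha> \<beta> assume a: "\<alpha> \<in> Pr D A" and b: "\<beta> \<in> Pr D ?B"
    have pa: "Re D ?p \<alpha> \<in> Pr D ?B" using re_pr hp a by blast
    show "Pi ?p (im ?B (Re D ?p \<alpha>) \<beta>) = im A \<alpha> (Pi ?p \<beta>)"
    proof (rule yoneda)
      show "Pi ?p (im ?B (Re D ?p \<alpha>) \<beta>) \<in> Pr D A" using Pp im_pr pa b by blast
      show "im A \<alpha> (Pi ?p \<beta>) \<in> Pr D A" using im_pr Pp a b by blast
      fix w assume w: "w \<in> Pr D A"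
      have pw: "Re D ?p w \<in> Pr D ?B" using re_pr hp w by blast
      have "Le D A w (Pi ?p (im ?B (Re D ?p \<alpha>) \<beta>)) \<longleftrightarrow> Le D ?B (Re D ?p w) (im ?B (Re D ?p \<alpha>) \<beta>)"
        using ad w im_pr pa b unfolding is_ladj_def by blast
      also have "\<dots> \<longleftrightarrow> Le D ?B (meet D ?B (Re D ?p w) (Re D ?p \<alpha>)) \<beta>" using le_im pw pa b by blast
      also have "\<dots> \<longleftrightarrow> Le D ?B (Re D ?p (meet D A w \<alpha>)) \<beta>" using re_meet2[OF hp w a] by simp
      also have "\<dots> \<longleftrightarrow> Le D A (meet D A w \<alpha>) (Pi ?p \<beta>)"
        using ad meet_pr2[OF w a] b unfolding is_ladj_def by blast
      also have "\<dots> \<longleftrightarrow> Le D A w (im A \<alpha> (Pi ?p \<beta>))" using le_im w a Pp b by blast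
      finally show "Le D A w (Pi ?p (im ?B (Re D ?p \<alpha>) \<beta>)) = Le D A w (im A \<alpha> (Pi ?p \<beta>))" .
    qed
  qed
  thus ?thesis using ad by blast
qed

lemma hax: assumes p: "\<phi> \<in> Pr D A" and s: "\<psi> \<in> Pr D A" and g: "\<gamma> \<in> Pr D A"
  shows "Le D A \<phi> (im A \<psi> \<phi>) \<and>
        Le D A (im A \<gamma> (im A \<phi> \<psi>)) (im A (im A \<gamma> \<phi>) (im A \<gamma> \<psi>)) \<and>
        (Le D A \<gamma> (im A \<phi> \<psi>) \<and> Le D A \<gamma> \<phi> \<longrightarrow> Le D A \<gamma> \<psi>) \<and>
        (Le D A \<phi> \<psi> \<longrightarrow> Le D A \<gamma> (im A \<phi> \<psi>))"
proof (intro conjI impI)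
  show "Le D A \<phi> (im A \<psi> \<phi>)" using le_im p s meet_le1 by blast
next
  assume "Le D A \<gamma> (im A \<phi> \<psi>) \<and> Le D A \<gamma> \<phi>" thus "Le D A \<gamma> \<psi>" using mp2 g p s by blast
next
  assume l: "Le D A \<phi> \<psi>"
  have "Le D A (meet D A \<gamma> \<phi>) \<psi>" using le_trans[OF meet_pr2[OF g p] p s meet_le2[OF g p] l] .
  thus "Le D A \<gamma> (im A \<phi> \<psi>)" using le_im g p s by blast
next
  let ?u = "im A \<gamma> (im A \<phi> \<psi>)"
  have u: "?u \<in> Pr D A" using im_pr g p s by blast
  have gp: "im A \<gamma> \<phi> \<in> Pr D A" using im_pr g p by blast
  have gs: "im A \<gamma> \<psi> \<in> Pr D A" using im_pr g s by blast
  have ps: "im A \<phi> \<psi> \<in> Pr D A" using im_pr p s by blast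
  let ?n = "meet D A ?u (im A \<gamma> \<phi>)"
  have n: "?n \<in> Pr D A" using meet_pr2 u gp by blast
  let ?m = "meet D A ?n \<gamma>"
  have m: "?m \<in> Pr D A" using meet_pr2 n g by blast
  have m1: "Le D A ?m \<gamma>" using meet_le2 n g by blast
  have mn: "Le D A ?m ?n" using meet_le1 n g by blast
  have m2: "Le D A ?m ?u" using le_trans[OF m n u mn meet_le1[OF u gp]] .
  have m3: "Le D A ?m (im A \<gamma> \<phi>)" using le_trans[OF m n gp mn meet_le2[OF u gp]] .
  have m4: "Le D A ?m \<phi>" using mp2[OF m g p m3 m1] .
  have m5: "Le D A ?m (im A \<phi> \<psi>)" using mp2[OF m g ps m2 m1] .
  have "Le D A ?m \<psi>" using mp2[OF m p s m5 m4] .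
  hence "Le D A ?n (im A \<gamma> \<psi>)" using le_im n g s by blast
  thus "Le D A ?u (im A (im A \<gamma> \<phi>) (im A \<gamma> \<psi>))" using le_im u gp gs by blast
qed

lemma is_implicational: "implicational D"
  unfolding implicational_def
proof (rule exI[of _ im], intro conjI)
  show "\<forall>A. \<forall>x\<in>Pr D A. \<forall>y\<in>Pr D A. im A x y \<in> Pr D A" using im_pr by blast
  show "\<forall>f. \<forall>x\<in>Pr D (ccod D f). \<forall>y\<in>Pr D (ccod D f).
        Re D f (im (ccod D f) x y) = im (cdom D f) (Re D f x) (Re D f y)"
    using re_im by (simp add: hom_def)
  show "\<forall>X A. \<exists>\<Pi>. is_ladj D A (prd D X A) (Re D (pr2 D X A)) \<Pi> \<and>
        (\<forall>\<alpha>\<in>Pr D A. \<forall>\<beta>\<in>Pr D (prd D X A).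
           \<Pi> (im (prd D X A) (Re D (pr2 D X A) \<alpha>) \<beta>) = im A \<alpha> (\<Pi> \<beta>))" using frob by blast
  show "\<forall>A. \<forall>\<phi>\<in>Pr D A. \<forall>\<psi>\<in>Pr D A. \<forall>\<gamma>\<in>Pr D A. Le D A \<phi> (im A \<psi> \<phi>) \<and>
        Le D A (im A \<gamma> (im A \<phi> \<psi>)) (im A (im A \<gamma> \<phi>) (im A \<gamma> \<psi>)) \<and>
        (Le D A \<gamma> (im A \<phi> \<psi>) \<and> Le D A \<gamma> \<phi> \<longrightarrow> Le D A \<gamma> \<psi>) \<and>
        (Le D A \<phi> \<psi> \<longrightarrow> Le D A \<gamma> (im A \<phi> \<psi>))" using hax by blast
qed

end

theorem mainTheorem16:
  fixes D :: "('o,'a,'p) doctrine"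
  assumes "doctrine D" and "heaco D"
  shows "implicational D \<longleftrightarrow> tripos D"
proof
  assume "tripos D"
  then interpret tr D using assms(1) by unfold_locales
  show "implicational D" by (rule is_implicational)
next
  assume "implicational D"
  then obtain imp :: "'o \<Rightarrow> 'p \<Rightarrow> 'p \<Rightarrow> 'p" where
    i1: "\<forall>A. \<forall>x\<in>Pr D A. \<forall>y\<in>Pr D A. imp A x y \<in> Pr D A" and
    i2: "\<forall>f. \<forall>x\<in>Pr D (ccod D f). \<forall>y\<in>Pr D (ccod D f).
        Re D f (imp (ccod D f) x y) = imp (cdom D f) (Re D f x) (Re D f y)" and
    i3: "\<forall>X A. \<exists>\<Pi>. is_ladj D A (prd D X A) (Re D (pr2 D X A)) \<Pi> \<and>
        (\<forall>\<alpha>\<in>Pr D A. \<forall>\<beta>\<in>Pr D (prd D X A).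
           \<Pi> (imp (prd D X A) (Re D (pr2 D X A) \<alpha>) \<beta>) = imp A \<alpha> (\<Pi> \<beta>))" and
    i4: "\<forall>A. \<forall>\<phi>\<in>Pr D A. \<forall>\<psi>\<in>Pr D A. \<forall>\<gamma>\<in>Pr D A.
        Le D A \<phi> (imp A \<psi> \<phi>) \<and>
        Le D A (imp A \<gamma> (imp A \<phi> \<psi>)) (imp A (imp A \<gamma> \<phi>) (imp A \<gamma> \<psi>)) \<and>
        (Le D A \<gamma> (imp A \<phi> \<psi>) \<and> Le D A \<gamma> \<phi> \<longrightarrow> Le D A \<gamma> \<psi>) \<and>
        (Le D A \<phi> \<psi> \<longrightarrow> Le D A \<gamma> (imp A \<phi> \<psi>))"
    unfolding implicational_def by blast
  obtain \<delta> eps1 eps2 cc where e: "eaco_with D \<delta> eps1 eps2 cc" and ho: "higher_order D"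
    using assms(2) unfolding heaco_def by blast
  have el: "elementary_with D \<delta>" and cc1: "co_comprehension D cc" and cc2: "full_cc D cc"
    and ac: "AC D eps1 eps2" using e unfolding eaco_with_def by blast+
  have pr: "primary D" using el unfolding elementary_with_def by blast
  interpret hi2 D cc imp \<delta> eps1 eps2
    apply unfold_locales
    using assms(1) pr cc1 cc2 i1 i2 i3 i4 el ac ho by blast+
  show "tripos D" by (rule is_tripos)
qed

end
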